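(* Assume $\alpha,\beta>1$, $\lambda>0$ and $a,b$ satisfy $(A_1)$, $(A_2)$. Then $J_\lambda$ satisfies the Palais–Smale condition $(PS)_c$ for every $c\in\mathbb{R}$: every sequence $\{(u_k,v_k)\}\subset H_\lambda$ with $J_\lambda(u_k,v_k)\to c$ and $J_\lambda'(u_k,v_k)\to0$ in $H_\lambda^*$ is bounded in $H_\lambda$ and has a subsequence converging strongly in $H_\lambda$.
   Context: $G=(V,E)$ locally finite connected graph with symmetric weights $w_{xy}>0$ and measure $\mu\ge\mu_{\min}>0$; $\Gamma(u,v)(x)=\frac1{2\mu(x)}\sum_{y\sim x}w_{xy}(u(y)-u(x))(v(y)-v(x))$, $|\nabla u|^2=\Gamma(u,u)$, $\int_Vf\,d\mu=\sum_x\mu(x)f(x)$. $(A_1)$: $a,b\ge0$, with $\{a=0\}$, $\{b=0\}$ and their intersection non-empty bounded domains. $(A_2)$: for some $x_0$, $a(x),b(x)\to+\infty$ as $d(x,x_0)\to\infty$. $H_\lambda=\{(u,v)\in W^{1,2}(V)^2:\int_V(\lambda au^2+\lambda bv^2)d\mu<\infty\}$ with $\|(u,v)\|_{H_\lambda}^2=\int_V(|\nabla u|^2+|\nabla v|^2+(\lambda a+1)u^2+(\lambda b+1)v^2)d\mu$. $J_\lambda(u,v)=\frac12\|(u,v)\|_{H_\lambda}^2-\frac1{\alpha+\beta}\int_V|u|^\alpha|v|^\beta d\mu$, a $C^1$ functional on $H_\lambda$. *)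

theory Defs
  imports "HOL-Analysis.Analysis"
begin

definition adj :: "('v \<Rightarrow> 'v \<Rightarrow> real) \<Rightarrow> 'v \<Rightarrow> 'v \<Rightarrow> bool" where
  "adj w x y \<longleftrightarrow> w x y > 0"

definition walk :: "('v \<Rightarrow> 'v \<Rightarrow> real) \<Rightarrow> nat \<Rightarrow> (nat \<Rightarrow> 'v) \<Rightarrow> 'v \<Rightarrow> 'v \<Rightarrow> bool" where
  "walk w n f x y \<longleftrightarrow> f 0 = x \<and> f n = y \<and> (\<forall>i<n. adj w (f i) (f (Suc i)))"

definition weighted_graph :: "('v \<Rightarrow> 'v \<Rightarrow> real) \<Rightarrow> ('v \<Rightarrow> real) \<Rightarrow> bool" where
  "weighted_graph w mu \<longleftrightarrow>
     (\<forall>x y. w x y = w y x) \<and> (\<forall>x y. w x y \<ge> 0) \<and>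
     (\<forall>x. finite {y. adj w x y}) \<and>
     (\<forall>x y. \<exists>n f. walk w n f x y) \<and>
     (\<exists>mu_min>0. \<forall>x. mu x \<ge> mu_min)"

definition gdist :: "('v \<Rightarrow> 'v \<Rightarrow> real) \<Rightarrow> 'v \<Rightarrow> 'v \<Rightarrow> nat" where
  "gdist w x y = (LEAST n. \<exists>f. walk w n f x y)"

definition bounded_domain :: "('v \<Rightarrow> 'v \<Rightarrow> real) \<Rightarrow> 'v set \<Rightarrow> bool" where
  "bounded_domain w \<Omega> \<longleftrightarrow> \<Omega> \<noteq> {} \<and>
     (\<exists>x0 R. \<forall>x\<in>\<Omega>. gdist w x0 x \<le> R) \<and>
     (\<forall>x\<in>\<Omega>. \<forall>y\<in>\<Omega>. \<exists>n f. walk w n f x y \<and> (\<forall>i\<le>n. f i \<in> \<Omega>))"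

definition Gam :: "('v \<Rightarrow> 'v \<Rightarrow> real) \<Rightarrow> ('v \<Rightarrow> real) \<Rightarrow> ('v \<Rightarrow> real) \<Rightarrow> ('v \<Rightarrow> real) \<Rightarrow> 'v \<Rightarrow> real" where
  "Gam w mu u v x = 1 / (2 * mu x) * (\<Sum>y\<in>{y. adj w x y}. w x y * (u y - u x) * (v y - v x))"

definition grad2 :: "('v \<Rightarrow> 'v \<Rightarrow> real) \<Rightarrow> ('v \<Rightarrow> real) \<Rightarrow> ('v \<Rightarrow> real) \<Rightarrow> 'v \<Rightarrow> real" where
  "grad2 w mu u = Gam w mu u u"

definition integrable_V :: "('v \<Rightarrow> real) \<Rightarrow> ('v \<Rightarrow> real) \<Rightarrow> bool" where
  "integrable_V mu f \<longleftrightarrow> (\<lambda>x. mu x * f x) summable_on UNIV"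

definition integral_V :: "('v \<Rightarrow> real) \<Rightarrow> ('v \<Rightarrow> real) \<Rightarrow> real" where
  "integral_V mu f = infsum (\<lambda>x. mu x * f x) UNIV"

definition W12 :: "('v \<Rightarrow> 'v \<Rightarrow> real) \<Rightarrow> ('v \<Rightarrow> real) \<Rightarrow> ('v \<Rightarrow> real) \<Rightarrow> bool" where
  "W12 w mu u \<longleftrightarrow> integrable_V mu (\<lambda>x. grad2 w mu u x + (u x)\<^sup>2)"

type_synonym 'v pairfun = "('v \<Rightarrow> real) \<times> ('v \<Rightarrow> real)"

definition H_lam :: "('v \<Rightarrow> 'v \<Rightarrow> real) \<Rightarrow> ('v \<Rightarrow> real) \<Rightarrow> ('v \<Rightarrow> real) \<Rightarrow> ('v \<Rightarrow> real) \<Rightarrow> real \<Rightarrow> 'v pairfun set" where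
  "H_lam w mu a b lam = {(u, v). W12 w mu u \<and> W12 w mu v \<and>
      integrable_V mu (\<lambda>x. lam * a x * (u x)\<^sup>2 + lam * b x * (v x)\<^sup>2)}"

definition H_norm :: "('v \<Rightarrow> 'v \<Rightarrow> real) \<Rightarrow> ('v \<Rightarrow> real) \<Rightarrow> ('v \<Rightarrow> real) \<Rightarrow> ('v \<Rightarrow> real) \<Rightarrow> real \<Rightarrow> 'v pairfun \<Rightarrow> real" where
  "H_norm w mu a b lam p = sqrt (integral_V mu (\<lambda>x.
      grad2 w mu (fst p) x + grad2 w mu (snd p) x
      + (lam * a x + 1) * (fst p x)\<^sup>2 + (lam * b x + 1) * (snd p x)\<^sup>2))"

definition padd :: "'v pairfun \<Rightarrow> 'v pairfun \<Rightarrow> 'v pairfun" where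
  "padd p q = ((\<lambda>x. fst p x + fst q x), (\<lambda>x. snd p x + snd q x))"

definition psub :: "'v pairfun \<Rightarrow> 'v pairfun \<Rightarrow> 'v pairfun" where
  "psub p q = ((\<lambda>x. fst p x - fst q x), (\<lambda>x. snd p x - snd q x))"

definition pscale :: "real \<Rightarrow> 'v pairfun \<Rightarrow> 'v pairfun" where
  "pscale c p = ((\<lambda>x. c * fst p x), (\<lambda>x. c * snd p x))"

definition J_lam :: "('v \<Rightarrow> 'v \<Rightarrow> real) \<Rightarrow> ('v \<Rightarrow> real) \<Rightarrow> ('v \<Rightarrow> real) \<Rightarrow> ('v \<Rightarrow> real) \<Rightarrow> real \<Rightarrow> real \<Rightarrow> real \<Rightarrow> 'v pairfun \<Rightarrow> real" where
  "J_lam w mu a b lam \<alpha> \<beta> p = 1/2 * (H_norm w mu a b lam p)\<^sup>2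
      - 1 / (\<alpha> + \<beta>) * integral_V mu (\<lambda>x. \<bar>fst p x\<bar> powr \<alpha> * \<bar>snd p x\<bar> powr \<beta>)"

definition frechet_deriv_H ::
  "'v pairfun set \<Rightarrow> ('v pairfun \<Rightarrow> real) \<Rightarrow> ('v pairfun \<Rightarrow> real) \<Rightarrow> 'v pairfun \<Rightarrow> ('v pairfun \<Rightarrow> real) \<Rightarrow> bool" where
  "frechet_deriv_H H nrm F p D \<longleftrightarrow>
     (\<forall>h\<in>H. \<forall>k\<in>H. D (padd h k) = D h + D k) \<and>
     (\<forall>c. \<forall>h\<in>H. D (pscale c h) = c * D h) \<and>
     (\<exists>C. \<forall>h\<in>H. \<bar>D h\<bar> \<le> C * nrm h) \<and>
     (\<forall>\<epsilon>>0. \<exists>\<delta>>0. \<forall>h\<in>H. nrm h < \<delta> \<longrightarrow>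
          \<bar>F (padd p h) - F p - D h\<bar> \<le> \<epsilon> * nrm h)"

definition dual_norm :: "'v pairfun set \<Rightarrow> ('v pairfun \<Rightarrow> real) \<Rightarrow> ('v pairfun \<Rightarrow> real) \<Rightarrow> real" where
  "dual_norm H nrm D = (SUP h \<in> {h\<in>H. nrm h \<le> 1}. \<bar>D h\<bar>)"

end

theory Submission
  imports Defs "HOL-Library.Diagonal_Subsequence"
begin

lemma Gam_lin1:
  "Gam w mu (\<lambda>y. f y + t * g y) k x = Gam w mu f k x + t * Gam w mu g k x"
proof -
  have "(\<Sum>y\<in>{y. adj w x y}. w x y * (f y + t * g y - (f x + t * g x)) * (k y - k x))
     = (\<Sum>y\<in>{y. adj w x y}. w x y * (f y - f x) * (k y - k x)) + t * (\<Sum>y\<in>{y. adj w x y}. w x y * (g y - g x) * (k y - k x))"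
    by (subst sum_distrib_left, subst sum.distrib[symmetric], rule sum.cong, simp_all add: algebra_simps)
  then show ?thesis unfolding Gam_def by (simp add: algebra_simps)
qed

lemma Gam_sym: "Gam w mu f g x = Gam w mu g f x"
  unfolding Gam_def by (simp add: algebra_simps)

lemma Gam_scale1: "Gam w mu (\<lambda>y. t * g y) k x = t * Gam w mu g k x"
  using Gam_lin1[of w mu "\<lambda>_. 0" t g k x] unfolding Gam_def by simp

lemma young2: "2 * \<bar>s * t\<bar> \<le> s\<^sup>2 + (t::real)\<^sup>2"
proof -
  have "0 \<le> (\<bar>s\<bar> - \<bar>t\<bar>)\<^sup>2" by simp
  then have "0 \<le> \<bar>s\<bar>\<^sup>2 - 2*\<bar>s\<bar>*\<bar>t\<bar> + \<bar>t\<bar>\<^sup>2" by (simp add: power2_diff)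
  then show ?thesis by (simp add: abs_mult)
qed

lemma aux1: assumes "(W::real) \<ge> 0" shows "\<bar>W*d*e\<bar> \<le> (W*d*d + W*e*e)/2"
proof -
  have "2*\<bar>d*e\<bar> \<le> d*d+e*e" using young2[of d e] by (simp add: power2_eq_square)
  hence "W*(2*\<bar>d*e\<bar>) \<le> W*(d*d+e*e)" using assms by (rule mult_left_mono)
  thus ?thesis using assms by (simp add: abs_mult distrib_left mult.assoc)
qed
lemma aux2: assumes "(W::real) \<ge> 0" shows "2 * \<bar>W*(d*e)\<bar> \<le> W*d\<^sup>2 + W*e\<^sup>2"
  using aux1[OF assms, of d e] by (simp add: power2_eq_square mult.assoc)

lemma scale_aux: assumes "(c::real) > 0" "2*\<bar>S\<bar> \<le> P + Q" shows "2*\<bar>c*S\<bar> \<le> c*P + c*Q"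
proof -
  have "c*(2*\<bar>S\<bar>) \<le> c*(P+Q)" using assms by (intro mult_left_mono) auto
  moreover have "\<bar>c*S\<bar> = c*\<bar>S\<bar>" using assms by (simp add: abs_mult)
  ultimately show ?thesis by (simp add: algebra_simps)
qed


lemma summable_on_diff_real:
  fixes f g :: "'a \<Rightarrow> real"
  assumes "f summable_on A" "g summable_on A"
  shows "(\<lambda>x. f x - g x) summable_on A"
proof -
  have "(\<lambda>x. (-1) * g x) summable_on A" using assms(2) by (rule summable_on_cmult_right)
  then have "(\<lambda>x. f x + (-1) * g x) summable_on A" using assms(1) by (intro summable_on_add)
  then show ?thesis by simp
qed

lemma infsum_diff_real:
  fixes f g :: "'a \<Rightarrow> real"
  assumes "f summable_on A" "g summable_on A"
  shows "infsum (\<lambda>x. f x - g x) A = infsum f A - infsum g A"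
proof -
  have s: "(\<lambda>x. (-1) * g x) summable_on A" using assms(2) by (rule summable_on_cmult_right)
  have "infsum (\<lambda>x. f x + (-1) * g x) A = infsum f A + infsum (\<lambda>x. (-1) * g x) A"
    using assms(1) s by (rule infsum_add)
  also have "infsum (\<lambda>x. (-1) * g x) A = - infsum g A" by (simp add: infsum_uminus)
  finally show ?thesis by simp
qed

lemma summable_abs_bound:
  fixes f g :: "'a \<Rightarrow> real"
  assumes "g summable_on A" "\<And>x. x \<in> A \<Longrightarrow> \<bar>f x\<bar> \<le> g x"
  shows "f summable_on A"
proof -
  note g = summable_on_iff_abs_summable_on_real[THEN iffD1, OF assms(1)]
  have "norm (f x) \<le> norm (g x)" if "x \<in> A" for x using assms(2)[OF that] by auto
  note f = Infinite_Sum.abs_summable_on_comparison_test[OF g this]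
  show ?thesis using summable_on_iff_abs_summable_on_real[THEN iffD2, OF f] .
qed

lemma infsum_abs_le:
  fixes f :: "'a \<Rightarrow> real"
  assumes "f summable_on A"
  shows "\<bar>infsum f A\<bar> \<le> infsum (\<lambda>x. \<bar>f x\<bar>) A"
  using norm_infsum_bound[OF summable_on_iff_abs_summable_on_real[THEN iffD1, OF assms]] by simp


lemma powr_diff_le:
  fixes r s R \<alpha> :: real
  assumes a: "\<alpha> \<ge> 1" and s: "0 \<le> s" "s \<le> r" and r: "r \<le> R"
  shows "r powr \<alpha> - s powr \<alpha> \<le> \<alpha> * R powr (\<alpha> - 1) * (r - s)"
proof (cases "s = r")
  case True then show ?thesis by simp
next
  case False
  then have sr: "s < r" using s by simp
  have Rm: "r powr (\<alpha> - 1) \<le> R powr (\<alpha> - 1)" using a s r by (intro powr_mono2) auto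
  show ?thesis
  proof (cases "s = 0")
    case True
    have "r powr (\<alpha> - 1) * r powr 1 = r powr \<alpha>" by (simp only: powr_add[symmetric]) simp
    then have "r powr \<alpha> = r powr (\<alpha> - 1) * r powr 1" by simp
    also have "\<dots> = r powr (\<alpha> - 1) * r" using s by simp
    also have "\<dots> \<le> R powr (\<alpha> - 1) * r" using Rm s by (intro mult_right_mono) auto
    also have "\<dots> \<le> \<alpha> * R powr (\<alpha> - 1) * r" using mult_right_mono[OF a, of "R powr (\<alpha> - 1) * r"] s sr by (simp add: mult.assoc)
    finally show ?thesis using True a by simp
  next
    case False
    then have s0: "s > 0" using s by simp
    have "\<exists>z. s < z \<and> z < r \<and> r powr \<alpha> - s powr \<alpha> = (r - s) * (\<alpha> * z powr (\<alpha> - 1))"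
      by (rule MVT2[OF sr]) (use s0 in \<open>auto intro!: has_real_derivative_powr\<close>)
    then obtain z where z: "s < z" "z < r" "r powr \<alpha> - s powr \<alpha> = (r - s) * (\<alpha> * z powr (\<alpha> - 1))" by blast
    have "z powr (\<alpha> - 1) \<le> R powr (\<alpha> - 1)" using z s0 r a by (intro powr_mono2) auto
    then have "\<alpha> * z powr (\<alpha> - 1) \<le> \<alpha> * R powr (\<alpha> - 1)" using a by (intro mult_left_mono) auto
    then have "(r - s) * (\<alpha> * z powr (\<alpha> - 1)) \<le> (r - s) * (\<alpha> * R powr (\<alpha> - 1))" using sr by (intro mult_left_mono[where c="r - s"]) auto
    then show ?thesis using z by (simp add: algebra_simps)
  qed
qed

lemma abs_powr_diff:
  fixes x y R \<alpha> :: real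
  assumes a: "\<alpha> \<ge> 1" and "\<bar>x\<bar> \<le> R" "\<bar>y\<bar> \<le> R"
  shows "\<bar>\<bar>x\<bar> powr \<alpha> - \<bar>y\<bar> powr \<alpha>\<bar> \<le> \<alpha> * R powr (\<alpha> - 1) * \<bar>x - y\<bar>"
proof -
  have pos: "\<alpha> * R powr (\<alpha> - 1) \<ge> 0" using a by simp
  have tri: "\<bar>\<bar>x\<bar> - \<bar>y\<bar>\<bar> \<le> \<bar>x - y\<bar>" by (rule abs_triangle_ineq3)
  show ?thesis
  proof (cases "\<bar>y\<bar> \<le> \<bar>x\<bar>")
    case True
    have "\<bar>x\<bar> powr \<alpha> - \<bar>y\<bar> powr \<alpha> \<le> \<alpha> * R powr (\<alpha> - 1) * (\<bar>x\<bar> - \<bar>y\<bar>)"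
      using True assms by (intro powr_diff_le) auto
    moreover have "\<bar>y\<bar> powr \<alpha> \<le> \<bar>x\<bar> powr \<alpha>" using True a by (intro powr_mono2) auto
    moreover have "\<alpha> * R powr (\<alpha> - 1) * (\<bar>x\<bar> - \<bar>y\<bar>) \<le> \<alpha> * R powr (\<alpha> - 1) * \<bar>x - y\<bar>"
      using tri pos by (intro mult_left_mono) auto
    ultimately show ?thesis by simp
  next
    case False
    have "\<bar>y\<bar> powr \<alpha> - \<bar>x\<bar> powr \<alpha> \<le> \<alpha> * R powr (\<alpha> - 1) * (\<bar>y\<bar> - \<bar>x\<bar>)"
      using False assms by (intro powr_diff_le) auto
    moreover have "\<bar>x\<bar> powr \<alpha> \<le> \<bar>y\<bar> powr \<alpha>" using False a by (intro powr_mono2) auto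
    moreover have "\<alpha> * R powr (\<alpha> - 1) * (\<bar>y\<bar> - \<bar>x\<bar>) \<le> \<alpha> * R powr (\<alpha> - 1) * \<bar>x - y\<bar>"
      using tri pos by (intro mult_left_mono) auto
    ultimately show ?thesis by simp
  qed
qed

lemma powr_le_lin:
  fixes s R \<beta> :: real
  assumes "\<beta> \<ge> 1" "0 \<le> s" "s \<le> R"
  shows "s powr \<beta> \<le> R powr (\<beta> - 1) * s"
proof -
  have "s powr (\<beta> - 1) * s powr 1 = s powr \<beta>" by (simp only: powr_add[symmetric]) simp
  then have "s powr \<beta> = s powr (\<beta> - 1) * s powr 1" by simp
  also have "\<dots> = s powr (\<beta> - 1) * s" using assms by simp
  also have "\<dots> \<le> R powr (\<beta> - 1) * s" using assms by (intro mult_right_mono powr_mono2) auto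
  finally show ?thesis .
qed

lemma phi_diff:
  fixes a a' b b' R \<alpha> \<beta> :: real
  assumes ab: "\<alpha> \<ge> 1" "\<beta> \<ge> 1"
    and R: "\<bar>a\<bar> \<le> R" "\<bar>a'\<bar> \<le> R" "\<bar>b\<bar> \<le> R" "\<bar>b'\<bar> \<le> R"
  shows "\<bar>\<bar>a'\<bar> powr \<alpha> * \<bar>b'\<bar> powr \<beta> - \<bar>a\<bar> powr \<alpha> * \<bar>b\<bar> powr \<beta>\<bar>
    \<le> (\<alpha> + \<beta>) * (R powr (\<alpha> - 1) * R powr (\<beta> - 1)) * (\<bar>a' - a\<bar> + \<bar>b' - b\<bar>) * (\<bar>a\<bar> + \<bar>b'\<bar>)"
proof -
  define P where "P = R powr (\<alpha> - 1) * R powr (\<beta> - 1)"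
  have P0: "P \<ge> 0" unfolding P_def by simp
  have e1: "\<bar>a'\<bar> powr \<alpha> * \<bar>b'\<bar> powr \<beta> - \<bar>a\<bar> powr \<alpha> * \<bar>b\<bar> powr \<beta>
     = (\<bar>a'\<bar> powr \<alpha> - \<bar>a\<bar> powr \<alpha>) * \<bar>b'\<bar> powr \<beta> + \<bar>a\<bar> powr \<alpha> * (\<bar>b'\<bar> powr \<beta> - \<bar>b\<bar> powr \<beta>)"
    by (simp add: algebra_simps)
  have t1: "\<bar>(\<bar>a'\<bar> powr \<alpha> - \<bar>a\<bar> powr \<alpha>) * \<bar>b'\<bar> powr \<beta>\<bar> \<le> (\<alpha> * R powr (\<alpha> - 1) * \<bar>a' - a\<bar>) * (R powr (\<beta> - 1) * \<bar>b'\<bar>)"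
    unfolding abs_mult using abs_powr_diff[OF ab(1) R(2) R(1)] powr_le_lin[OF ab(2), of "\<bar>b'\<bar>" R] R ab
    by (intro mult_mono) auto
  have t2: "\<bar>\<bar>a\<bar> powr \<alpha> * (\<bar>b'\<bar> powr \<beta> - \<bar>b\<bar> powr \<beta>)\<bar> \<le> (R powr (\<alpha> - 1) * \<bar>a\<bar>) * (\<beta> * R powr (\<beta> - 1) * \<bar>b' - b\<bar>)"
    unfolding abs_mult using abs_powr_diff[OF ab(2) R(4) R(3)] powr_le_lin[OF ab(1), of "\<bar>a\<bar>" R] R ab
    by (intro mult_mono) auto
  have e2: "(\<alpha> * R powr (\<alpha> - 1) * \<bar>a' - a\<bar>) * (R powr (\<beta> - 1) * \<bar>b'\<bar>) + (R powr (\<alpha> - 1) * \<bar>a\<bar>) * (\<beta> * R powr (\<beta> - 1) * \<bar>b' - b\<bar>)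
     = \<alpha> * P * \<bar>a' - a\<bar> * \<bar>b'\<bar> + \<beta> * P * \<bar>a\<bar> * \<bar>b' - b\<bar>" unfolding P_def by (simp add: algebra_simps)
  have e3: "(\<alpha> + \<beta>) * P * (\<bar>a' - a\<bar> + \<bar>b' - b\<bar>) * (\<bar>a\<bar> + \<bar>b'\<bar>) = (\<alpha> * P * \<bar>a' - a\<bar> * \<bar>b'\<bar> + \<beta> * P * \<bar>a\<bar> * \<bar>b' - b\<bar>)
     + (\<beta> * P * \<bar>a' - a\<bar> * \<bar>b'\<bar> + \<alpha> * P * \<bar>a\<bar> * \<bar>b' - b\<bar> + (\<alpha> + \<beta>) * P * (\<bar>a' - a\<bar> * \<bar>a\<bar> + \<bar>b' - b\<bar> * \<bar>b'\<bar>))"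
    by (simp add: algebra_simps)
  have r0: "0 \<le> \<beta> * P * \<bar>a' - a\<bar> * \<bar>b'\<bar> + \<alpha> * P * \<bar>a\<bar> * \<bar>b' - b\<bar> + (\<alpha> + \<beta>) * P * (\<bar>a' - a\<bar> * \<bar>a\<bar> + \<bar>b' - b\<bar> * \<bar>b'\<bar>)"
    using ab P0 by (intro add_nonneg_nonneg mult_nonneg_nonneg) auto
  have "\<bar>(\<bar>a'\<bar> powr \<alpha> - \<bar>a\<bar> powr \<alpha>) * \<bar>b'\<bar> powr \<beta> + \<bar>a\<bar> powr \<alpha> * (\<bar>b'\<bar> powr \<beta> - \<bar>b\<bar> powr \<beta>)\<bar>
     \<le> \<bar>(\<bar>a'\<bar> powr \<alpha> - \<bar>a\<bar> powr \<alpha>) * \<bar>b'\<bar> powr \<beta>\<bar> + \<bar>\<bar>a\<bar> powr \<alpha> * (\<bar>b'\<bar> powr \<beta> - \<bar>b\<bar> powr \<beta>)\<bar>"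
    by (rule abs_triangle_ineq)
  then show ?thesis unfolding e1 P_def[symmetric] using t1 t2 e2 e3 r0 by linarith
qed


lemma cs_real:
  fixes I A B :: real
  assumes A: "A \<ge> 0" and B: "B \<ge> 0" and h: "\<And>s. s > 0 \<Longrightarrow> 2 * I \<le> s * A + B / s"
  shows "I \<le> sqrt A * sqrt B"
proof (cases "A > 0 \<and> B > 0")
  case True
  define s where "s = sqrt B / sqrt A"
  have s0: "s > 0" using True unfolding s_def by simp
  have "s * A = sqrt A * sqrt B" unfolding s_def using True
    by (simp add: field_simps)
  moreover have "B / s = sqrt A * sqrt B" unfolding s_def using True
    by (simp add: field_simps)
  ultimately show ?thesis using h[OF s0] by simp
next
  case False
  have "I \<le> 0"
  proof (rule ccontr)
    assume I: "\<not> I \<le> 0"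
    then have I0: "I > 0" by simp
    show False
    proof (cases "A = 0")
      case True
      define s where "s = B / I + 1"
      have s0: "s > 0" unfolding s_def using I0 B by (simp add: add_nonneg_pos)
      have "B / s \<le> I"
      proof -
        have "B \<le> I * s" unfolding s_def using I0 by (simp add: field_simps)
        then show ?thesis using s0 by (simp add: divide_le_eq mult.commute)
      qed
      then show False using h[OF s0] True I0 by simp
    next
      case False
      then have "B = 0" using \<open>\<not> (A > 0 \<and> B > 0)\<close> A B by auto
      define s where "s = I / (A + 1)"
      have s0: "s > 0" unfolding s_def using I0 A by simp
      have "s * A \<le> I"
      proof -
        have "I * A \<le> I * (A + 1)" using I0 by simp
        then show ?thesis unfolding s_def using A by (simp add: field_simps)
      qed
      then show False using h[OF s0] \<open>B = 0\<close> I0 by simp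
    qed
  qed
  moreover have "sqrt A * sqrt B \<ge> 0" using A B by simp
  ultimately show ?thesis by linarith
qed

lemma cs_infsum:
  fixes m f g :: "'a \<Rightarrow> real"
  assumes m: "\<And>x. m x \<ge> 0" and f: "\<And>x. f x \<ge> 0" and g: "\<And>x. g x \<ge> 0"
    and sf: "(\<lambda>x. m x * (f x)\<^sup>2) summable_on A" and sg: "(\<lambda>x. m x * (g x)\<^sup>2) summable_on A"
  shows "(\<lambda>x. m x * (f x * g x)) summable_on A"
    and "infsum (\<lambda>x. m x * (f x * g x)) A \<le> sqrt (infsum (\<lambda>x. m x * (f x)\<^sup>2) A) * sqrt (infsum (\<lambda>x. m x * (g x)\<^sup>2) A)"
proof -
  have pt: "2 * (m x * (f x * g x)) \<le> s * (m x * (f x)\<^sup>2) + (m x * (g x)\<^sup>2) / s" if s: "s > 0" for s x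
  proof -
    have "0 \<le> (s * f x - g x)\<^sup>2" by simp
    then have "2 * s * (f x * g x) \<le> s\<^sup>2 * (f x)\<^sup>2 + (g x)\<^sup>2" by (simp add: power2_diff power_mult_distrib algebra_simps)
    then have "2 * (f x * g x) \<le> s * (f x)\<^sup>2 + (g x)\<^sup>2 / s" using s
      by (simp add: field_simps power2_eq_square)
    then have "m x * (2 * (f x * g x)) \<le> m x * (s * (f x)\<^sup>2 + (g x)\<^sup>2 / s)" using m by (rule mult_left_mono)
    then show ?thesis by (simp add: algebra_simps)
  qed
  have bnd: "(\<lambda>x. (m x * (f x)\<^sup>2 + m x * (g x)\<^sup>2) / 2) summable_on A"
    unfolding divide_inverse by (intro summable_on_cmult_left summable_on_add sf sg)
  show sfg: "(\<lambda>x. m x * (f x * g x)) summable_on A"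
    apply (rule summable_on_comparison_test[OF bnd])
    subgoal for x using pt[of 1 x] by simp
    subgoal for x using m f g by simp
    done
  show "infsum (\<lambda>x. m x * (f x * g x)) A \<le> sqrt (infsum (\<lambda>x. m x * (f x)\<^sup>2) A) * sqrt (infsum (\<lambda>x. m x * (g x)\<^sup>2) A)"
  proof (rule cs_real)
    show "0 \<le> infsum (\<lambda>x. m x * (f x)\<^sup>2) A" "0 \<le> infsum (\<lambda>x. m x * (g x)\<^sup>2) A"
      using m by (auto intro!: infsum_nonneg)
    fix s :: real assume s: "s > 0"
    have "2 * infsum (\<lambda>x. m x * (f x * g x)) A = infsum (\<lambda>x. 2 * (m x * (f x * g x))) A"
      by (simp add: infsum_cmult_right')
    also have "\<dots> \<le> infsum (\<lambda>x. s * (m x * (f x)\<^sup>2) + (m x * (g x)\<^sup>2) / s) A"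
      apply (rule infsum_mono)
      using sfg apply (rule summable_on_cmult_right)
      unfolding divide_inverse apply (intro summable_on_add summable_on_cmult_right summable_on_cmult_left sf sg)
      using pt[OF s] by (simp add: divide_inverse)
    also have "\<dots> = s * infsum (\<lambda>x. m x * (f x)\<^sup>2) A + infsum (\<lambda>x. m x * (g x)\<^sup>2) A / s"
      unfolding divide_inverse
      by (subst infsum_add) (auto intro!: summable_on_cmult_right summable_on_cmult_left sf sg simp: infsum_cmult_right' infsum_cmult_left')
    finally show "2 * infsum (\<lambda>x. m x * (f x * g x)) A \<le> s * infsum (\<lambda>x. m x * (f x)\<^sup>2) A + infsum (\<lambda>x. m x * (g x)\<^sup>2) A / s" .
  qed
qed

locale ctx =
  fixes w :: "'v \<Rightarrow> 'v \<Rightarrow> real" and mu a b :: "'v \<Rightarrow> real"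
    and lam \<alpha> \<beta> m0 :: real
  assumes w_nn: "\<forall>x y. w x y \<ge> 0" and fin_adj: "\<forall>x. finite {y. adj w x y}"
    and m0: "m0 > 0" and mu_ge: "\<forall>x. mu x \<ge> m0"
    and alpha: "\<alpha> > 1" and beta: "\<beta> > 1" and lam: "lam > 0"
    and a_nn: "\<forall>x. a x \<ge> 0" and b_nn: "\<forall>x. b x \<ge> 0"
begin

definition e :: "'v pairfun \<Rightarrow> 'v \<Rightarrow> real" where
  "e p x = grad2 w mu (fst p) x + grad2 w mu (snd p) x
      + (lam * a x + 1) * (fst p x)\<^sup>2 + (lam * b x + 1) * (snd p x)\<^sup>2"

definition Ep :: "'v pairfun \<Rightarrow> 'v pairfun \<Rightarrow> 'v \<Rightarrow> real" where
  "Ep p q x = Gam w mu (fst p) (fst q) x + Gam w mu (snd p) (snd q) x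
      + (lam * a x + 1) * (fst p x * fst q x) + (lam * b x + 1) * (snd p x * snd q x)"

lemma mu_pos: "mu x > 0"
  using m0 mu_ge by (meson less_le_trans)

lemma Gam_nn: "Gam w mu f f x \<ge> 0"
proof -
  have "\<forall>y. 0 \<le> w x y * (f y - f x) * (f y - f x)" using w_nn by (simp add: mult.assoc)
  then show ?thesis unfolding Gam_def using mu_pos[of x] by (simp add: sum_nonneg)
qed

lemma Gam_abs: "2 * \<bar>Gam w mu f g x\<bar> \<le> Gam w mu f f x + Gam w mu g g x"
proof -
  let ?N = "{y. adj w x y}"
  have "\<bar>\<Sum>y\<in>?N. w x y * (f y - f x) * (g y - g x)\<bar> \<le> (\<Sum>y\<in>?N. \<bar>w x y * (f y - f x) * (g y - g x)\<bar>)"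
    by (rule sum_abs)
  also have "\<dots> \<le> (\<Sum>y\<in>?N. (w x y * (f y - f x) * (f y - f x) + w x y * (g y - g x) * (g y - g x)) / 2)"
  proof (rule sum_mono)
    fix y
    have w0: "w x y \<ge> 0" using w_nn by auto
    show "\<bar>w x y * (f y - f x) * (g y - g x)\<bar> \<le> (w x y * (f y - f x) * (f y - f x) + w x y * (g y - g x) * (g y - g x)) / 2"
      using aux1[OF w0] .
  qed
  also have "\<dots> = ((\<Sum>y\<in>?N. w x y * (f y - f x) * (f y - f x)) + (\<Sum>y\<in>?N. w x y * (g y - g x) * (g y - g x))) / 2"
    by (simp only: sum_divide_distrib[symmetric] sum.distrib)
  finally have *: "2 * \<bar>\<Sum>y\<in>?N. w x y * (f y - f x) * (g y - g x)\<bar> \<le> (\<Sum>y\<in>?N. w x y * (f y - f x) * (f y - f x)) + (\<Sum>y\<in>?N. w x y * (g y - g x) * (g y - g x))"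
    by simp
  have mp: "1 / (2 * mu x) > 0" using mu_pos[of x] by simp
  have "2 * \<bar>1 / (2 * mu x) * (\<Sum>y\<in>?N. w x y * (f y - f x) * (g y - g x))\<bar> \<le> 1 / (2 * mu x) * (\<Sum>y\<in>?N. w x y * (f y - f x) * (f y - f x)) + 1 / (2 * mu x) * (\<Sum>y\<in>?N. w x y * (g y - g x) * (g y - g x))"
    by (rule scale_aux[OF mp *])
  then show ?thesis unfolding Gam_def .
qed

lemma Gam_quad:
  "Gam w mu (\<lambda>y. f y + t * g y) (\<lambda>y. f y + t * g y) x
    = Gam w mu f f x + 2 * t * Gam w mu f g x + t\<^sup>2 * Gam w mu g g x"
proof -
  have "Gam w mu (\<lambda>y. f y + t * g y) (\<lambda>y. f y + t * g y) x
     = Gam w mu f (\<lambda>y. f y + t * g y) x + t * Gam w mu g (\<lambda>y. f y + t * g y) x"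
    by (rule Gam_lin1)
  also have "Gam w mu f (\<lambda>y. f y + t * g y) x = Gam w mu f f x + t * Gam w mu g f x"
    by (subst Gam_sym, rule Gam_lin1)
  also have "Gam w mu g (\<lambda>y. f y + t * g y) x = Gam w mu f g x + t * Gam w mu g g x"
    by (subst Gam_sym, rule Gam_lin1)
  finally show ?thesis by (simp add: Gam_sym[of w mu g f] power2_eq_square algebra_simps)
qed

lemma Gam_scale2: "Gam w mu (\<lambda>y. c * f y) (\<lambda>y. c * f y) x = c\<^sup>2 * Gam w mu f f x"
  using Gam_quad[of "\<lambda>_. 0" c f x] unfolding Gam_def by simp

lemma Gam_scale_r: "Gam w mu f (\<lambda>y. c * g y) x = c * Gam w mu f g x"
  by (subst Gam_sym, subst Gam_scale1, simp add: Gam_sym)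

lemma fst_padd[simp]: "fst (padd p q) = (\<lambda>x. fst p x + fst q x)" and snd_padd[simp]: "snd (padd p q) = (\<lambda>x. snd p x + snd q x)"
  by (simp_all add: padd_def)
lemma fst_pscale[simp]: "fst (pscale c p) = (\<lambda>x. c * fst p x)" and snd_pscale[simp]: "snd (pscale c p) = (\<lambda>x. c * snd p x)"
  by (simp_all add: pscale_def)
lemma fst_psub[simp]: "fst (psub p q) = (\<lambda>x. fst p x - fst q x)" and snd_psub[simp]: "snd (psub p q) = (\<lambda>x. snd p x - snd q x)"
  by (simp_all add: psub_def)

lemma psub_eq: "psub p q = padd p (pscale (-1) q)"
  by (simp add: psub_def padd_def pscale_def)

lemma padd_scale_self: "padd p (pscale t p) = pscale (1 + t) p"
  by (simp add: padd_def pscale_def algebra_simps)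

lemma e_expand: "e (padd p (pscale t h)) x = e p x + 2 * t * Ep p h x + t\<^sup>2 * e h x"
  unfolding e_def Ep_def grad2_def by (simp add: Gam_quad power2_eq_square algebra_simps)

lemma e_scale: "e (pscale c p) x = c\<^sup>2 * e p x"
  unfolding e_def grad2_def by (simp add: Gam_scale2 power2_eq_square algebra_simps)

lemma Ep_scale: "Ep p (pscale c h) x = c * Ep p h x"
  unfolding Ep_def by (simp add: Gam_scale_r algebra_simps)

lemma e_nn: "e p x \<ge> 0"
  unfolding e_def grad2_def using Gam_nn[of "fst p" x] Gam_nn[of "snd p" x] a_nn b_nn lam
  by (intro add_nonneg_nonneg mult_nonneg_nonneg) auto

lemma sq_le_e: "(fst p x)\<^sup>2 + (snd p x)\<^sup>2 \<le> e p x"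
  and lam_le_e: "lam * a x * (fst p x)\<^sup>2 + lam * b x * (snd p x)\<^sup>2 \<le> e p x"
  unfolding e_def grad2_def using Gam_nn[of "fst p" x] Gam_nn[of "snd p" x] a_nn b_nn lam
  by (auto simp: algebra_simps)

lemma Ep_abs: "2 * \<bar>Ep p q x\<bar> \<le> e p x + e q x"
proof -
  have g1: "2 * \<bar>Gam w mu (fst p) (fst q) x\<bar> \<le> Gam w mu (fst p) (fst p) x + Gam w mu (fst q) (fst q) x"
    and g2: "2 * \<bar>Gam w mu (snd p) (snd q) x\<bar> \<le> Gam w mu (snd p) (snd p) x + Gam w mu (snd q) (snd q) x"
    by (rule Gam_abs)+
  have ca: "lam * a x + 1 \<ge> 0" and cb: "lam * b x + 1 \<ge> 0" using lam a_nn b_nn by auto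
  note s = young2
  have h1: "2 * \<bar>(lam * a x + 1) * (fst p x * fst q x)\<bar> \<le> (lam * a x + 1) * (fst p x)\<^sup>2 + (lam * a x + 1) * (fst q x)\<^sup>2"
    using aux2[OF ca] .
  have h2: "2 * \<bar>(lam * b x + 1) * (snd p x * snd q x)\<bar> \<le> (lam * b x + 1) * (snd p x)\<^sup>2 + (lam * b x + 1) * (snd q x)\<^sup>2"
    using aux2[OF cb] .
  have tri: "\<bar>A + B + C + D\<bar> \<le> \<bar>A\<bar> + \<bar>B\<bar> + \<bar>C\<bar> + \<bar>D\<bar>" for A B C D :: real by arith
  show ?thesis unfolding Ep_def e_def grad2_def
    using g1 g2 h1 h2 tri[of "Gam w mu (fst p) (fst q) x" "Gam w mu (snd p) (snd q) x"
      "(lam * a x + 1) * (fst p x * fst q x)" "(lam * b x + 1) * (snd p x * snd q x)"]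
    by linarith
qed

lemma e_comb_le: "e (padd p (pscale t h)) x \<le> 2 * e p x + 2 * t\<^sup>2 * e h x"
proof -
  have "2 * \<bar>Ep p (pscale t h) x\<bar> \<le> e p x + e (pscale t h) x" by (rule Ep_abs)
  then have "2 * \<bar>t * Ep p h x\<bar> \<le> e p x + t\<^sup>2 * e h x" by (simp add: Ep_scale e_scale)
  moreover have "2 * t * Ep p h x \<le> 2 * \<bar>t * Ep p h x\<bar>" by simp
  moreover have "t\<^sup>2 * e h x \<ge> 0" using e_nn[of h x] by simp
  ultimately show ?thesis unfolding e_expand using e_nn[of p x] by linarith
qed


definition nsq :: "'v pairfun \<Rightarrow> real" where "nsq p = infsum (\<lambda>x. mu x * e p x) UNIV"
definition inH :: "'v pairfun \<Rightarrow> bool" where "inH p \<longleftrightarrow> (\<lambda>x. mu x * e p x) summable_on UNIV"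
definition Bf :: "'v pairfun \<Rightarrow> 'v pairfun \<Rightarrow> real" where "Bf p q = infsum (\<lambda>x. mu x * Ep p q x) UNIV"
definition phi :: "'v pairfun \<Rightarrow> 'v \<Rightarrow> real" where "phi p x = \<bar>fst p x\<bar> powr \<alpha> * \<bar>snd p x\<bar> powr \<beta>"
definition Nl :: "'v pairfun \<Rightarrow> real" where "Nl p = infsum (\<lambda>x. mu x * phi p x) UNIV"
definition L2 :: "'v pairfun \<Rightarrow> real" where "L2 p = infsum (\<lambda>x. mu x * ((fst p x)\<^sup>2 + (snd p x)\<^sup>2)) UNIV"

lemma mue_nn: "mu x * e p x \<ge> 0"
  using mu_pos[of x] e_nn[of p x] by simp

lemma nsq_nn: "nsq p \<ge> 0"
  unfolding nsq_def by (rule infsum_nonneg) (rule mue_nn)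

lemma H_norm_eq: "H_norm w mu a b lam p = sqrt (nsq p)"
  unfolding H_norm_def nsq_def integral_V_def e_def ..

lemma J_eq: "J_lam w mu a b lam \<alpha> \<beta> p = nsq p / 2 - Nl p / (\<alpha> + \<beta>)"
  unfolding J_lam_def H_norm_eq Nl_def integral_V_def phi_def using nsq_nn[of p] by simp

lemma e_decomp: "e p x = (grad2 w mu (fst p) x + (fst p x)\<^sup>2) + (grad2 w mu (snd p) x + (snd p x)\<^sup>2)
   + (lam * a x * (fst p x)\<^sup>2 + lam * b x * (snd p x)\<^sup>2)"
  unfolding e_def by (simp add: algebra_simps)

lemma H_iff: "p \<in> H_lam w mu a b lam \<longleftrightarrow> inH p"
proof
  assume "p \<in> H_lam w mu a b lam"
  then have s1: "(\<lambda>x. mu x * (grad2 w mu (fst p) x + (fst p x)\<^sup>2)) summable_on UNIV"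
    and s2: "(\<lambda>x. mu x * (grad2 w mu (snd p) x + (snd p x)\<^sup>2)) summable_on UNIV"
    and s3: "(\<lambda>x. mu x * (lam * a x * (fst p x)\<^sup>2 + lam * b x * (snd p x)\<^sup>2)) summable_on UNIV"
    unfolding H_lam_def W12_def integrable_V_def by (auto simp: case_prod_beta)
  have "(\<lambda>x. mu x * (grad2 w mu (fst p) x + (fst p x)\<^sup>2) + mu x * (grad2 w mu (snd p) x + (snd p x)\<^sup>2)
     + mu x * (lam * a x * (fst p x)\<^sup>2 + lam * b x * (snd p x)\<^sup>2)) summable_on UNIV"
    by (intro summable_on_add s1 s2 s3)
  then show "inH p" unfolding inH_def e_def by (simp add: algebra_simps)
next
  assume "inH p"
  then have s: "(\<lambda>x. mu x * e p x) summable_on UNIV" unfolding inH_def .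
  have g1: "grad2 w mu (fst p) x \<ge> 0" "grad2 w mu (snd p) x \<ge> 0" for x
    unfolding grad2_def by (rule Gam_nn)+
  have l1: "lam * a x * (fst p x)\<^sup>2 \<ge> 0" "lam * b x * (snd p x)\<^sup>2 \<ge> 0" for x
    using lam a_nn b_nn by auto
  have "(\<lambda>x. mu x * (grad2 w mu (fst p) x + (fst p x)\<^sup>2)) summable_on UNIV"
    apply (rule summable_on_comparison_test[OF s])
     subgoal for x using g1[of x] l1[of x] mu_pos[of x] zero_le_power2[of "fst p x"] zero_le_power2[of "snd p x"]
       unfolding e_decomp[of p x] by (intro mult_left_mono) auto
    subgoal for x using mu_pos[of x] g1[of x] l1[of x] lam a_nn b_nn by (intro mult_nonneg_nonneg add_nonneg_nonneg) (auto simp: less_imp_le)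
    done
  moreover have "(\<lambda>x. mu x * (grad2 w mu (snd p) x + (snd p x)\<^sup>2)) summable_on UNIV"
    apply (rule summable_on_comparison_test[OF s])
     subgoal for x using g1[of x] l1[of x] mu_pos[of x] zero_le_power2[of "fst p x"] zero_le_power2[of "snd p x"]
       unfolding e_decomp[of p x] by (intro mult_left_mono) auto
    subgoal for x using mu_pos[of x] g1[of x] l1[of x] lam a_nn b_nn by (intro mult_nonneg_nonneg add_nonneg_nonneg) (auto simp: less_imp_le)
    done
  moreover have "(\<lambda>x. mu x * (lam * a x * (fst p x)\<^sup>2 + lam * b x * (snd p x)\<^sup>2)) summable_on UNIV"
    apply (rule summable_on_comparison_test[OF s])
     subgoal for x using g1[of x] l1[of x] mu_pos[of x] zero_le_power2[of "fst p x"] zero_le_power2[of "snd p x"]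
       unfolding e_decomp[of p x] by (intro mult_left_mono) auto
    subgoal for x using mu_pos[of x] g1[of x] l1[of x] lam a_nn b_nn by (intro mult_nonneg_nonneg add_nonneg_nonneg) (auto simp: less_imp_le)
    done
  ultimately show "p \<in> H_lam w mu a b lam"
    unfolding H_lam_def W12_def integrable_V_def by (auto simp: case_prod_beta)
qed

lemma inH_comb: assumes "inH p" "inH h" shows "inH (padd p (pscale t h))"
proof -
  have "(\<lambda>x. 2 * (mu x * e p x) + (2 * t\<^sup>2) * (mu x * e h x)) summable_on UNIV"
    using assms unfolding inH_def by (intro summable_on_add summable_on_cmult_right)
  then show ?thesis unfolding inH_def
    apply (rule summable_on_comparison_test)
    subgoal for x using mult_left_mono[OF e_comb_le[of p t h x] less_imp_le[OF mu_pos[of x]]]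
      by (simp add: algebra_simps)
    by (rule mue_nn)
qed

lemma inH_scale: assumes "inH p" shows "inH (pscale c p)"
  using assms unfolding inH_def e_scale
  by (simp add: summable_on_cmult_right mult.left_commute[of "mu _"])

lemma inH_psub: "inH p \<Longrightarrow> inH q \<Longrightarrow> inH (psub p q)"
  unfolding psub_eq by (rule inH_comb)

lemma inH_padd: "inH p \<Longrightarrow> inH q \<Longrightarrow> inH (padd p q)"
  using inH_comb[of p q 1] by (simp add: pscale_def)

lemma Ep_summable: assumes "inH p" "inH h" shows "(\<lambda>x. mu x * Ep p h x) summable_on UNIV"
proof (rule summable_abs_bound)
  show "(\<lambda>x. (mu x * e p x + mu x * e h x) / 2) summable_on UNIV"
    using assms unfolding inH_def divide_inverse by (intro summable_on_cmult_left summable_on_add)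
  fix x
  have "2 * \<bar>Ep p h x\<bar> \<le> e p x + e h x" by (rule Ep_abs)
  then have "mu x * (2 * \<bar>Ep p h x\<bar>) \<le> mu x * (e p x + e h x)"
    using mu_pos[of x] by (intro mult_left_mono) auto
  then show "\<bar>mu x * Ep p h x\<bar> \<le> (mu x * e p x + mu x * e h x) / 2"
    using mu_pos[of x] by (simp add: abs_mult algebra_simps)
qed

lemma nsq_expand: assumes "inH p" "inH h"
  shows "nsq (padd p (pscale t h)) = nsq p + 2 * t * Bf p h + t\<^sup>2 * nsq h"
proof -
  have s1: "(\<lambda>x. mu x * e p x) summable_on UNIV" and s3: "(\<lambda>x. mu x * e h x) summable_on UNIV"
    using assms unfolding inH_def by auto
  have s2: "(\<lambda>x. mu x * Ep p h x) summable_on UNIV" using Ep_summable[OF assms] .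
  have "nsq (padd p (pscale t h)) = infsum (\<lambda>x. mu x * e p x + (2 * t) * (mu x * Ep p h x) + t\<^sup>2 * (mu x * e h x)) UNIV"
    unfolding nsq_def e_expand by (simp add: algebra_simps)
  also have "\<dots> = infsum (\<lambda>x. mu x * e p x + (2 * t) * (mu x * Ep p h x)) UNIV + infsum (\<lambda>x. t\<^sup>2 * (mu x * e h x)) UNIV"
    by (intro infsum_add summable_on_add summable_on_cmult_right s1 s2 s3)
  also have "infsum (\<lambda>x. mu x * e p x + (2 * t) * (mu x * Ep p h x)) UNIV = nsq p + infsum (\<lambda>x. (2 * t) * (mu x * Ep p h x)) UNIV"
    unfolding nsq_def by (intro infsum_add summable_on_cmult_right s1 s2)
  finally show ?thesis unfolding nsq_def Bf_def by (simp add: infsum_cmult_right')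
qed

lemma nsq_scale: "nsq (pscale c p) = c\<^sup>2 * nsq p"
  unfolding nsq_def e_scale by (simp add: mult.left_commute[of "mu _"] infsum_cmult_right')

lemma Ep_self: "Ep p p x = e p x"
  unfolding Ep_def e_def grad2_def by (simp add: power2_eq_square)

lemma Bf_self: "Bf p p = nsq p"
  unfolding Bf_def nsq_def Ep_self ..

lemma Ep_lin2: "Ep p (padd q (pscale t h)) x = Ep p q x + t * Ep p h x"
proof -
  have "Gam w mu f (\<lambda>y. g y + t * k y) x = Gam w mu f g x + t * Gam w mu f k x" for f g k
    by (subst Gam_sym, subst Gam_lin1, simp add: Gam_sym)
  then show ?thesis unfolding Ep_def by (simp add: algebra_simps)
qed

lemma Bf_psub: assumes "inH p" "inH q" shows "Bf p (psub q p) = Bf p q - nsq p"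
proof -
  have "Bf p (psub q p) = infsum (\<lambda>x. mu x * Ep p q x - mu x * Ep p p x) UNIV"
    unfolding Bf_def psub_eq Ep_lin2 by (simp add: algebra_simps)
  also have "\<dots> = Bf p q - Bf p p"
    unfolding Bf_def by (intro infsum_diff_real Ep_summable assms)
  finally show ?thesis by (simp add: Bf_self)
qed

lemma single_le: assumes "inH p" shows "mu x * e p x \<le> nsq p"
proof -
  have "sum (\<lambda>x. mu x * e p x) {x} \<le> nsq p"
    unfolding nsq_def using assms unfolding inH_def
    by (intro finite_sum_le_infsum) (auto intro: mue_nn)
  then show ?thesis by simp
qed

lemma sup_bound: assumes "inH p" shows "(fst p x)\<^sup>2 + (snd p x)\<^sup>2 \<le> nsq p / m0"
proof -
  have "m0 * ((fst p x)\<^sup>2 + (snd p x)\<^sup>2) \<le> mu x * e p x"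
    using mu_ge sq_le_e[of p x] m0 mu_pos[of x] by (intro mult_mono) (auto simp: less_imp_le)
  also have "\<dots> \<le> nsq p" by (rule single_le[OF assms])
  finally show ?thesis using m0 by (simp add: field_simps)
qed

lemma sup_bound1: assumes "inH p" shows "\<bar>fst p x\<bar> \<le> sqrt (nsq p / m0)" "\<bar>snd p x\<bar> \<le> sqrt (nsq p / m0)"
proof -
  have "(fst p x)\<^sup>2 \<le> nsq p / m0" "(snd p x)\<^sup>2 \<le> nsq p / m0"
    using sup_bound[OF assms, of x] zero_le_power2[of "fst p x"] zero_le_power2[of "snd p x"] by linarith+
  from real_sqrt_le_mono[OF this(1)] real_sqrt_le_mono[OF this(2)]
  show "\<bar>fst p x\<bar> \<le> sqrt (nsq p / m0)" "\<bar>snd p x\<bar> \<le> sqrt (nsq p / m0)" by simp_all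
qed

lemma L2_summable: assumes "inH p" shows "(\<lambda>x. mu x * ((fst p x)\<^sup>2 + (snd p x)\<^sup>2)) summable_on UNIV"
  using assms unfolding inH_def
  apply (rule summable_on_comparison_test)
  subgoal for x using mu_pos[of x] sq_le_e[of p x] by (intro mult_left_mono) auto
  subgoal for x using mu_pos[of x] by (intro mult_nonneg_nonneg) auto
  done

lemma L2_le: assumes "inH p" shows "L2 p \<le> nsq p"
  unfolding L2_def nsq_def using L2_summable[OF assms] assms unfolding inH_def
  apply (rule infsum_mono)
  subgoal for x using mu_pos[of x] sq_le_e[of p x] by (intro mult_left_mono) auto
  done

lemma L2_nn: "L2 p \<ge> 0"
  unfolding L2_def by (intro infsum_nonneg mult_nonneg_nonneg) (auto simp: less_imp_le mu_pos)


end


context ctx begin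

lemma phi_nn: "phi p x \<ge> 0" unfolding phi_def by simp

lemma phi_scale: "phi (pscale c p) x = \<bar>c\<bar> powr (\<alpha> + \<beta>) * phi p x"
  unfolding phi_def by (simp add: abs_mult powr_mult powr_add)

lemma Nl_scale: "Nl (pscale c p) = \<bar>c\<bar> powr (\<alpha> + \<beta>) * Nl p"
  unfolding Nl_def phi_scale by (simp add: mult.left_commute[of "mu _"] infsum_cmult_right')

lemma phi_le: assumes "\<bar>fst p x\<bar> \<le> R" "\<bar>snd p x\<bar> \<le> R"
  shows "phi p x \<le> R powr (\<alpha> - 1) * R powr (\<beta> - 1) * ((fst p x)\<^sup>2 + (snd p x)\<^sup>2)"
proof -
  have "phi p x \<le> (R powr (\<alpha> - 1) * \<bar>fst p x\<bar>) * (R powr (\<beta> - 1) * \<bar>snd p x\<bar>)"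
    unfolding phi_def using assms alpha beta
    by (intro mult_mono powr_le_lin) auto
  also have "\<dots> = R powr (\<alpha> - 1) * R powr (\<beta> - 1) * \<bar>fst p x * snd p x\<bar>" by (simp add: abs_mult algebra_simps)
  also have "\<dots> \<le> R powr (\<alpha> - 1) * R powr (\<beta> - 1) * ((fst p x)\<^sup>2 + (snd p x)\<^sup>2)"
    using young2[of "fst p x" "snd p x"] by (intro mult_left_mono) auto
  finally show ?thesis .
qed

lemma phi_summable: assumes "inH p" shows "(\<lambda>x. mu x * phi p x) summable_on UNIV"
proof -
  define R where "R = sqrt (nsq p / m0)"
  define P where "P = R powr (\<alpha> - 1) * R powr (\<beta> - 1)"
  have "(\<lambda>x. P * (mu x * ((fst p x)\<^sup>2 + (snd p x)\<^sup>2))) summable_on UNIV"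
    by (intro summable_on_cmult_right L2_summable assms)
  then show ?thesis
    apply (rule summable_on_comparison_test)
    subgoal for x using phi_le[of p x R] sup_bound1[OF assms, of x] mu_pos[of x]
      unfolding R_def P_def by (simp add: mult_left_mono mult.left_commute)
    subgoal for x using mu_pos[of x] phi_nn[of p x] by simp
    done
qed

lemma sq3: "(\<bar>x\<bar> + \<bar>y\<bar> + \<bar>z\<bar>)\<^sup>2 \<le> 3 * (x\<^sup>2 + y\<^sup>2 + (z::real)\<^sup>2)"
proof -
  have "0 \<le> (\<bar>x\<bar>-\<bar>y\<bar>)\<^sup>2 + (\<bar>x\<bar>-\<bar>z\<bar>)\<^sup>2 + (\<bar>y\<bar>-\<bar>z\<bar>)\<^sup>2" by simp
  then show ?thesis by (simp add: power2_eq_square algebra_simps)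
qed

definition Sf :: "'v pairfun \<Rightarrow> 'v pairfun \<Rightarrow> 'v \<Rightarrow> real" where
  "Sf p h x = (\<bar>fst h x\<bar> + \<bar>snd h x\<bar>) * (\<bar>fst p x\<bar> + \<bar>snd p x\<bar> + \<bar>snd h x\<bar>)"

lemma Sf_cs: assumes "inH p" "inH h"
  shows "(\<lambda>x. mu x * Sf p h x) summable_on UNIV"
    "infsum (\<lambda>x. mu x * Sf p h x) UNIV \<le> sqrt (2 * L2 h) * sqrt (3 * (L2 p + L2 h))"
proof -
  define f where "f x = \<bar>fst h x\<bar> + \<bar>snd h x\<bar>" for x
  define g where "g x = \<bar>fst p x\<bar> + \<bar>snd p x\<bar> + \<bar>snd h x\<bar>" for x
  have f2: "(f x)\<^sup>2 \<le> 2 * ((fst h x)\<^sup>2 + (snd h x)\<^sup>2)" for x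
    unfolding f_def using young2[of "fst h x" "snd h x"] by (simp add: power2_sum abs_mult)
  have g2: "(g x)\<^sup>2 \<le> 3 * (((fst p x)\<^sup>2 + (snd p x)\<^sup>2) + ((fst h x)\<^sup>2 + (snd h x)\<^sup>2))" for x
    unfolding g_def by (rule order.trans[OF sq3]) simp
  note Lp = L2_summable[OF assms(1)] and Lh = L2_summable[OF assms(2)]
  have sf: "(\<lambda>x. mu x * (f x)\<^sup>2) summable_on UNIV"
    apply (rule summable_on_comparison_test[OF summable_on_cmult_right[OF Lh, of 2]])
    subgoal for x using mult_left_mono[OF f2[of x] less_imp_le[OF mu_pos[of x]]] by (simp add: algebra_simps)
    subgoal for x using mu_pos[of x] by simp
    done
  have sg: "(\<lambda>x. mu x * (g x)\<^sup>2) summable_on UNIV"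
    apply (rule summable_on_comparison_test[OF summable_on_cmult_right[OF summable_on_add[OF Lp Lh], of 3]])
    subgoal for x using mult_left_mono[OF g2[of x] less_imp_le[OF mu_pos[of x]]] by (simp add: algebra_simps)
    subgoal for x using mu_pos[of x] by simp
    done
  have m: "\<And>x. mu x \<ge> 0" using mu_pos less_imp_le by blast
  have fg: "\<And>x. Sf p h x = f x * g x" unfolding Sf_def f_def g_def ..
  show "(\<lambda>x. mu x * Sf p h x) summable_on UNIV" unfolding fg
    by (rule cs_infsum(1)[OF m _ _ sf sg]) (auto simp: f_def g_def)
  have "infsum (\<lambda>x. mu x * Sf p h x) UNIV \<le> sqrt (infsum (\<lambda>x. mu x * (f x)\<^sup>2) UNIV) * sqrt (infsum (\<lambda>x. mu x * (g x)\<^sup>2) UNIV)"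
    unfolding fg by (rule cs_infsum(2)[OF m _ _ sf sg]) (auto simp: f_def g_def)
  also have "\<dots> \<le> sqrt (2 * L2 h) * sqrt (3 * (L2 p + L2 h))"
  proof (intro mult_mono real_sqrt_le_mono)
    show "infsum (\<lambda>x. mu x * (f x)\<^sup>2) UNIV \<le> 2 * L2 h"
      unfolding L2_def infsum_cmult_right'[symmetric]
      by (rule infsum_mono[OF sf summable_on_cmult_right[OF Lh]])
        (use mult_left_mono[OF f2 less_imp_le[OF mu_pos]] in \<open>simp add: algebra_simps\<close>)
    have eq3: "3 * (L2 p + L2 h) = infsum (\<lambda>x. 3 * (mu x * ((fst p x)\<^sup>2 + (snd p x)\<^sup>2) + mu x * ((fst h x)\<^sup>2 + (snd h x)\<^sup>2))) UNIV"
      unfolding L2_def infsum_cmult_right' infsum_add[OF Lp Lh] ..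
    show "infsum (\<lambda>x. mu x * (g x)\<^sup>2) UNIV \<le> 3 * (L2 p + L2 h)"
      unfolding eq3
      by (rule infsum_mono[OF sg summable_on_cmult_right[OF summable_on_add[OF Lp Lh]]])
        (use mult_left_mono[OF g2 less_imp_le[OF mu_pos]] in \<open>simp add: algebra_simps\<close>)
  qed (use L2_nn mu_pos in \<open>auto intro!: infsum_nonneg simp: less_imp_le\<close>)
  finally show "infsum (\<lambda>x. mu x * Sf p h x) UNIV \<le> sqrt (2 * L2 h) * sqrt (3 * (L2 p + L2 h))" .
qed

lemma Nl_diff: assumes "inH p" "inH h" "\<bar>t\<bar> \<le> 1"
  shows "\<bar>Nl (padd p (pscale t h)) - Nl p\<bar> \<le> \<bar>t\<bar> * ((\<alpha> + \<beta>) * ((sqrt (nsq p / m0) + sqrt (nsq h / m0)) powr (\<alpha> - 1)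
      * (sqrt (nsq p / m0) + sqrt (nsq h / m0)) powr (\<beta> - 1))) * infsum (\<lambda>x. mu x * Sf p h x) UNIV"
proof -
  define R where "R = sqrt (nsq p / m0) + sqrt (nsq h / m0)"
  define Lc where "Lc = (\<alpha> + \<beta>) * (R powr (\<alpha> - 1) * R powr (\<beta> - 1))"
  let ?q = "padd p (pscale t h)"
  have inq: "inH ?q" using assms by (intro inH_comb)
  have pt: "\<bar>phi ?q x - phi p x\<bar> \<le> \<bar>t\<bar> * Lc * Sf p h x" for x
  proof -
    have b1: "\<bar>fst p x\<bar> \<le> R" "\<bar>snd p x\<bar> \<le> R" "\<bar>fst h x\<bar> \<le> R" "\<bar>snd h x\<bar> \<le> R"
      using sup_bound1[OF assms(1), of x] sup_bound1[OF assms(2), of x] unfolding R_def by auto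
    have tt: "\<bar>t * y\<bar> \<le> \<bar>y\<bar>" for y using assms(3) by (simp add: abs_mult mult_left_le_one_le)
    have b2: "\<bar>fst p x + t * fst h x\<bar> \<le> R" "\<bar>snd p x + t * snd h x\<bar> \<le> R"
      using sup_bound1[OF assms(1), of x] sup_bound1[OF assms(2), of x] tt[of "fst h x"] tt[of "snd h x"]
        abs_triangle_ineq[of "fst p x" "t * fst h x"] abs_triangle_ineq[of "snd p x" "t * snd h x"] unfolding R_def
      by linarith+
    have a1: "\<alpha> \<ge> 1" and b1': "\<beta> \<ge> 1" using alpha beta by auto
    note pd = phi_diff[OF a1 b1' b1(1) b2(1) b1(2) b2(2)]
    have pq: "phi ?q x = \<bar>fst p x + t * fst h x\<bar> powr \<alpha> * \<bar>snd p x + t * snd h x\<bar> powr \<beta>"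
      by (simp add: phi_def)
    have "\<bar>phi ?q x - phi p x\<bar> \<le> Lc * (\<bar>t * fst h x\<bar> + \<bar>t * snd h x\<bar>) * (\<bar>fst p x\<bar> + \<bar>snd p x + t * snd h x\<bar>)"
      using pd unfolding pq phi_def[of p x] Lc_def add_diff_cancel_left' .
    also have "\<dots> \<le> Lc * (\<bar>t\<bar> * (\<bar>fst h x\<bar> + \<bar>snd h x\<bar>)) * (\<bar>fst p x\<bar> + \<bar>snd p x\<bar> + \<bar>snd h x\<bar>)"
    proof -
      have e1: "Lc * (\<bar>t * fst h x\<bar> + \<bar>t * snd h x\<bar>) = Lc * (\<bar>t\<bar> * (\<bar>fst h x\<bar> + \<bar>snd h x\<bar>))"
        by (simp add: abs_mult algebra_simps)
      have "\<bar>snd p x + t * snd h x\<bar> \<le> \<bar>snd p x\<bar> + \<bar>snd h x\<bar>"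
        using tt[of "snd h x"] abs_triangle_ineq[of "snd p x" "t * snd h x"] by linarith
      then have i1: "\<bar>fst p x\<bar> + \<bar>snd p x + t * snd h x\<bar> \<le> \<bar>fst p x\<bar> + \<bar>snd p x\<bar> + \<bar>snd h x\<bar>" by simp
      have "Lc \<ge> 0" unfolding Lc_def using alpha beta by simp
      then have "Lc * (\<bar>t\<bar> * (\<bar>fst h x\<bar> + \<bar>snd h x\<bar>)) \<ge> 0" by simp
      from mult_left_mono[OF i1 this] show ?thesis unfolding e1 .
    qed
    finally show ?thesis unfolding Sf_def by (simp add: algebra_simps)
  qed
  have "Nl ?q - Nl p = infsum (\<lambda>x. mu x * phi ?q x - mu x * phi p x) UNIV"
    unfolding Nl_def by (rule infsum_diff_real[symmetric]) (intro phi_summable inq assms)+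
  then have "\<bar>Nl ?q - Nl p\<bar> \<le> infsum (\<lambda>x. \<bar>mu x * phi ?q x - mu x * phi p x\<bar>) UNIV"
    using infsum_abs_le[OF summable_on_diff_real[OF phi_summable[OF inq] phi_summable[OF assms(1)]]] by simp
  also have "\<dots> \<le> infsum (\<lambda>x. (\<bar>t\<bar> * Lc) * (mu x * Sf p h x)) UNIV"
  proof (rule infsum_mono)
    show "(\<lambda>x. \<bar>mu x * phi ?q x - mu x * phi p x\<bar>) summable_on UNIV"
      using summable_on_iff_abs_summable_on_real[THEN iffD1, OF summable_on_diff_real[OF phi_summable[OF inq] phi_summable[OF assms(1)]]]
      by simp
    show "(\<lambda>x. (\<bar>t\<bar> * Lc) * (mu x * Sf p h x)) summable_on UNIV"
      by (intro summable_on_cmult_right Sf_cs assms)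
    fix x
    have "\<bar>mu x * phi ?q x - mu x * phi p x\<bar> = mu x * \<bar>phi ?q x - phi p x\<bar>"
      using mu_pos[of x] by (simp add: abs_mult right_diff_distrib[symmetric])
    also have "\<dots> \<le> mu x * (\<bar>t\<bar> * Lc * Sf p h x)" using pt[of x] mu_pos[of x] by (intro mult_left_mono) auto
    finally show "\<bar>mu x * phi ?q x - mu x * phi p x\<bar> \<le> (\<bar>t\<bar> * Lc) * (mu x * Sf p h x)" by (simp add: algebra_simps)
  qed
  also have "\<dots> = \<bar>t\<bar> * Lc * infsum (\<lambda>x. mu x * Sf p h x) UNIV" by (simp add: infsum_cmult_right')
  finally show ?thesis unfolding Lc_def R_def .
qed

end


lemma quot_aux: fixes t B n X g :: real assumes "t \<noteq> 0" "g \<noteq> 0"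
  shows "(t * B + t\<^sup>2 * n / 2 - X / g) / t = B + t * n / 2 - X / (t * g)"
  using assms by (simp add: field_simps power2_eq_square)

context ctx begin


lemma nrm_scale: "(H_norm w mu a b lam) (pscale c p) = \<bar>c\<bar> * (H_norm w mu a b lam) p"
  unfolding H_norm_eq nsq_scale by (simp add: real_sqrt_mult nsq_nn)

lemma nrm_nn: "(H_norm w mu a b lam) p \<ge> 0" unfolding H_norm_eq by (simp add: nsq_nn)

lemma ev_at0: assumes "d > 0" "\<And>t::real. t \<noteq> 0 \<Longrightarrow> \<bar>t\<bar> < d \<Longrightarrow> P t" shows "eventually P (at 0)"
  unfolding eventually_at using assms by (auto simp: dist_real_def)

lemma dir_deriv:
  assumes fr: "frechet_deriv_H (H_lam w mu a b lam) (H_norm w mu a b lam) F p D" and h: "inH h"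
  shows "((\<lambda>t. (F (padd p (pscale t h)) - F p) / t) \<longlongrightarrow> D h) (at 0)"
proof (rule tendstoI)
  fix \<epsilon> :: real assume e: "\<epsilon> > 0"
  have hH: "h \<in> (H_lam w mu a b lam)" using h H_iff by blast
  have sH: "pscale t h \<in> (H_lam w mu a b lam)" for t using inH_scale[OF h] H_iff by blast
  have lin: "D (pscale t h) = t * D h" for t using fr hH unfolding frechet_deriv_H_def by blast
  define e' where "e' = \<epsilon> / (2 * ((H_norm w mu a b lam) h + 1))"
  have e'0: "e' > 0" unfolding e'_def using e nrm_nn[of h] by simp
  obtain \<delta> where d0: "\<delta> > 0" and dd: "\<forall>k\<in>(H_lam w mu a b lam). (H_norm w mu a b lam) k < \<delta> \<longrightarrow> \<bar>F (padd p k) - F p - D k\<bar> \<le> e' * (H_norm w mu a b lam) k"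
    using fr e'0 unfolding frechet_deriv_H_def by meson
  define d where "d = \<delta> / ((H_norm w mu a b lam) h + 1)"
  have dpos: "d > 0" unfolding d_def using d0 nrm_nn[of h] by simp
  show "\<forall>\<^sub>F t in at 0. dist ((F (padd p (pscale t h)) - F p) / t) (D h) < \<epsilon>"
  proof (rule ev_at0[OF dpos])
    fix t :: real assume t0: "t \<noteq> 0" and td: "\<bar>t\<bar> < d"
    have n1: "(H_norm w mu a b lam) h + 1 > 0" using nrm_nn[of h] by simp
    have "\<bar>t\<bar> * (H_norm w mu a b lam) h \<le> \<bar>t\<bar> * ((H_norm w mu a b lam) h + 1)" by (simp add: mult_left_mono)
    also have "\<dots> < d * ((H_norm w mu a b lam) h + 1)" using td n1 by (intro mult_strict_right_mono) auto
    also have "\<dots> = \<delta>" unfolding d_def using n1 by simp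
    finally have "(H_norm w mu a b lam) (pscale t h) < \<delta>" unfolding nrm_scale .
    then have "\<bar>F (padd p (pscale t h)) - F p - D (pscale t h)\<bar> \<le> e' * (H_norm w mu a b lam) (pscale t h)"
      using dd sH[of t] by blast
    then have "\<bar>F (padd p (pscale t h)) - F p - t * D h\<bar> \<le> e' * (\<bar>t\<bar> * (H_norm w mu a b lam) h)"
      unfolding lin nrm_scale .
    then have "\<bar>(F (padd p (pscale t h)) - F p - t * D h) / t\<bar> \<le> e' * (H_norm w mu a b lam) h"
      using t0 by (simp add: abs_divide field_simps)
    moreover have "(F (padd p (pscale t h)) - F p - t * D h) / t = (F (padd p (pscale t h)) - F p) / t - D h"
      using t0 by (simp add: field_simps)
    moreover have "e' * (H_norm w mu a b lam) h < \<epsilon>"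
    proof -
      have "e' * (H_norm w mu a b lam) h \<le> e' * ((H_norm w mu a b lam) h + 1)" using e'0 by simp
      also have "\<dots> = \<epsilon> / 2"
      proof -
        have "2 * (H_norm w mu a b lam) h + 2 \<noteq> 0" using n1 by simp
        then show ?thesis unfolding e'_def using n1 by (simp add: field_simps)
      qed
      finally show ?thesis using e by simp
    qed
    ultimately show "dist ((F (padd p (pscale t h)) - F p) / t) (D h) < \<epsilon>"
      by (simp add: dist_real_def)
  qed
qed

lemma deriv_self:
  assumes fr: "frechet_deriv_H (H_lam w mu a b lam) (H_norm w mu a b lam) (J_lam w mu a b lam \<alpha> \<beta>) p D" and p: "inH p"
  shows "D p = nsq p - Nl p"
proof -
  define A where "A = nsq p / 2"
  define B where "B = Nl p / (\<alpha> + \<beta>)"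
  define g where "g t = (1 + t)\<^sup>2 * A - (1 + t) powr (\<alpha> + \<beta>) * B" for t :: real
  have ab: "\<alpha> + \<beta> > 0" using alpha beta by simp
  have "(g has_field_derivative (2 * A - (\<alpha> + \<beta>) * B)) (at 0)"
    unfolding g_def by (auto intro!: derivative_eq_intros)
  then have l1: "((\<lambda>t. (g t - g 0) / t) \<longlongrightarrow> 2 * A - (\<alpha> + \<beta>) * B) (at 0)"
    unfolding has_field_derivative_iff by simp
  have ev: "\<forall>\<^sub>F t in at 0. (g t - g 0) / t = ((J_lam w mu a b lam \<alpha> \<beta>) (padd p (pscale t p)) - (J_lam w mu a b lam \<alpha> \<beta>) p) / t"
  proof (rule ev_at0[of 1])
    fix t :: real assume "t \<noteq> 0" "\<bar>t\<bar> < 1"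
    then have t1: "1 + t > 0" by auto
    have "(J_lam w mu a b lam \<alpha> \<beta>) (padd p (pscale t p)) = g t"
      unfolding padd_scale_self J_eq nsq_scale Nl_scale g_def A_def B_def using t1 by simp
    moreover have "(J_lam w mu a b lam \<alpha> \<beta>) p = g 0" unfolding J_eq g_def A_def B_def by simp
    ultimately show "(g t - g 0) / t = ((J_lam w mu a b lam \<alpha> \<beta>) (padd p (pscale t p)) - (J_lam w mu a b lam \<alpha> \<beta>) p) / t" by simp
  qed simp
  have l2: "((\<lambda>t. ((J_lam w mu a b lam \<alpha> \<beta>) (padd p (pscale t p)) - (J_lam w mu a b lam \<alpha> \<beta>) p) / t) \<longlongrightarrow> 2 * A - (\<alpha> + \<beta>) * B) (at 0)"
    using tendsto_cong[OF ev] l1 by blast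
  have "D p = 2 * A - (\<alpha> + \<beta>) * B"
    using tendsto_unique[OF _ dir_deriv[OF fr p] l2] by simp
  then show ?thesis unfolding A_def B_def using ab by simp
qed

definition Kc :: "'v pairfun \<Rightarrow> 'v pairfun \<Rightarrow> real" where
  "Kc p h = ((\<alpha> + \<beta>) * ((sqrt (nsq p / m0) + sqrt (nsq h / m0)) powr (\<alpha> - 1)
      * (sqrt (nsq p / m0) + sqrt (nsq h / m0)) powr (\<beta> - 1))) * infsum (\<lambda>x. mu x * Sf p h x) UNIV"

lemma deriv_bound:
  assumes fr: "frechet_deriv_H (H_lam w mu a b lam) (H_norm w mu a b lam) (J_lam w mu a b lam \<alpha> \<beta>) p D" and p: "inH p" and h: "inH h"
  shows "\<bar>D h - Bf p h\<bar> \<le> Kc p h / (\<alpha> + \<beta>)"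
proof -
  have ab: "\<alpha> + \<beta> > 0" using alpha beta by simp
  define f where "f t = ((J_lam w mu a b lam \<alpha> \<beta>) (padd p (pscale t h)) - (J_lam w mu a b lam \<alpha> \<beta>) p) / t" for t
  have lim: "(f \<longlongrightarrow> D h) (at 0)" unfolding f_def by (rule dir_deriv[OF fr h])
  have lim2: "((\<lambda>t. \<bar>f t - Bf p h\<bar> - \<bar>t\<bar> * nsq h / 2) \<longlongrightarrow> \<bar>D h - Bf p h\<bar> - \<bar>0\<bar> * nsq h / 2) (at 0)"
    by (intro tendsto_intros lim) simp
  then have lim2: "((\<lambda>t. \<bar>f t - Bf p h\<bar> - \<bar>t\<bar> * nsq h / 2) \<longlongrightarrow> \<bar>D h - Bf p h\<bar>) (at 0)" by simp
  have ev: "\<forall>\<^sub>F t in at 0. \<bar>f t - Bf p h\<bar> - \<bar>t\<bar> * nsq h / 2 \<le> Kc p h / (\<alpha> + \<beta>)"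
  proof (rule ev_at0[of 1])
    fix t :: real assume t0: "t \<noteq> 0" and "\<bar>t\<bar> < 1"
    then have t1: "\<bar>t\<bar> \<le> 1" by auto
    let ?q = "padd p (pscale t h)"
    have nd: "\<bar>Nl ?q - Nl p\<bar> \<le> \<bar>t\<bar> * Kc p h"
      using Nl_diff[OF p h t1] unfolding Kc_def by (simp add: mult.assoc)
    have "f t = (t * Bf p h + t\<^sup>2 * nsq h / 2 - (Nl ?q - Nl p) / (\<alpha> + \<beta>)) / t"
      unfolding f_def J_eq nsq_expand[OF p h] by (simp add: algebra_simps add_divide_distrib diff_divide_distrib)
    also have "\<dots> = Bf p h + t * nsq h / 2 - (Nl ?q - Nl p) / (t * (\<alpha> + \<beta>))"
      using t0 ab by (intro quot_aux) auto
    finally have "f t - Bf p h = t * nsq h / 2 - (Nl ?q - Nl p) / (t * (\<alpha> + \<beta>))" by simp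
    then have "\<bar>f t - Bf p h\<bar> \<le> \<bar>t * nsq h / 2\<bar> + \<bar>(Nl ?q - Nl p) / (t * (\<alpha> + \<beta>))\<bar>"
      using abs_triangle_ineq4 by metis
    also have "\<bar>t * nsq h / 2\<bar> = \<bar>t\<bar> * nsq h / 2" using nsq_nn[of h] by (simp add: abs_mult)
    also have "\<bar>(Nl ?q - Nl p) / (t * (\<alpha> + \<beta>))\<bar> = \<bar>Nl ?q - Nl p\<bar> / (\<bar>t\<bar> * (\<alpha> + \<beta>))"
      using ab by (simp add: abs_divide abs_mult)
    also have "\<dots> \<le> (\<bar>t\<bar> * Kc p h) / (\<bar>t\<bar> * (\<alpha> + \<beta>))"
      using nd t0 ab by (intro divide_right_mono) auto
    also have "\<dots> = Kc p h / (\<alpha> + \<beta>)" using t0 by simp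
    finally show "\<bar>f t - Bf p h\<bar> - \<bar>t\<bar> * nsq h / 2 \<le> Kc p h / (\<alpha> + \<beta>)" by simp
  qed simp
  show ?thesis
    by (rule tendsto_upperbound[OF lim2 ev]) simp
qed

lemma dual_bound:
  assumes fr: "frechet_deriv_H (H_lam w mu a b lam) (H_norm w mu a b lam) F p D" and h: "inH h"
  shows "\<bar>D h\<bar> \<le> dual_norm (H_lam w mu a b lam) (H_norm w mu a b lam) D * (H_norm w mu a b lam) h"
proof -
  obtain C where C: "\<forall>k\<in>(H_lam w mu a b lam). \<bar>D k\<bar> \<le> C * (H_norm w mu a b lam) k" using fr unfolding frechet_deriv_H_def by blast
  have lin: "\<forall>c. \<forall>k\<in>(H_lam w mu a b lam). D (pscale c k) = c * D k" using fr unfolding frechet_deriv_H_def by blast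
  have hH: "h \<in> (H_lam w mu a b lam)" using h H_iff by blast
  show ?thesis
  proof (cases "(H_norm w mu a b lam) h = 0")
    case True
    then show ?thesis using C hH by force
  next
    case False
    then have n0: "(H_norm w mu a b lam) h > 0" using nrm_nn[of h] by simp
    let ?k = "pscale (1 / (H_norm w mu a b lam) h) h"
    have kH: "?k \<in> (H_lam w mu a b lam)" using inH_scale[OF h] H_iff by blast
    have nk: "(H_norm w mu a b lam) ?k = 1" unfolding nrm_scale using n0 by simp
    have bdd: "bdd_above ((\<lambda>k. \<bar>D k\<bar>) ` {k \<in> (H_lam w mu a b lam). (H_norm w mu a b lam) k \<le> 1})"
    proof (rule bdd_aboveI2)
      fix k assume "k \<in> {k \<in> (H_lam w mu a b lam). (H_norm w mu a b lam) k \<le> 1}"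
      then have "k \<in> (H_lam w mu a b lam)" "(H_norm w mu a b lam) k \<le> 1" by auto
      then have "\<bar>D k\<bar> \<le> C * (H_norm w mu a b lam) k" using C by blast
      also have "\<dots> \<le> max C 0" using \<open>(H_norm w mu a b lam) k \<le> 1\<close> nrm_nn[of k]
        by (cases "C \<ge> 0") (auto intro: mult_left_le mult_nonpos_nonneg order.trans)
      finally show "\<bar>D k\<bar> \<le> max C 0" .
    qed
    have "\<bar>D ?k\<bar> \<le> dual_norm (H_lam w mu a b lam) (H_norm w mu a b lam) D"
      unfolding dual_norm_def by (rule cSUP_upper[OF _ bdd]) (use kH nk in auto)
    moreover have "D ?k = D h / (H_norm w mu a b lam) h" using lin hH by simp
    ultimately have "\<bar>D h\<bar> / (H_norm w mu a b lam) h \<le> dual_norm (H_lam w mu a b lam) (H_norm w mu a b lam) D" using n0 by (simp add: abs_divide)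
    then show ?thesis using n0 by (simp add: divide_le_eq)
  qed
qed

end


lemma bdd_conv_subseq:
  fixes X :: "nat \<Rightarrow> real"
  assumes "\<And>k. \<bar>X k\<bar> \<le> C"
  shows "\<exists>r. strict_mono r \<and> convergent (X \<circ> r)"
proof -
  obtain r where r: "strict_mono r" "monoseq (\<lambda>n. X (r n))" using seq_monosub by blast
  have "Bseq (\<lambda>n. X (r n))" using assms by (intro BseqI'[of _ C]) auto
  then have "convergent (\<lambda>n. X (r n))" using r(2) by (rule Bseq_monoseq_convergent)
  then show ?thesis using r(1) by (auto simp: o_def)
qed

lemma finite_subseq:
  fixes g :: "'i \<Rightarrow> nat \<Rightarrow> real" and s :: "nat \<Rightarrow> nat"
  assumes "finite I" and bnd: "\<And>i k. \<bar>g i k\<bar> \<le> C" and s: "strict_mono s"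
  shows "\<exists>r. strict_mono r \<and> (\<forall>i\<in>I. convergent (\<lambda>k. g i (s (r k))))"
  using assms(1)
proof (induction I rule: finite_induct)
  case empty
  have "strict_mono (id::nat \<Rightarrow> nat)" by (simp add: strict_mono_def)
  moreover have "\<forall>i\<in>{}. convergent (\<lambda>k. g i (s (id k)))" by simp
  ultimately show ?case by (intro exI[where x=id]) (simp add: id_def)
next
  case (insert i I)
  then obtain r where r: "strict_mono r" "\<forall>j\<in>I. convergent (\<lambda>k. g j (s (r k)))" by blast
  obtain r2 where r2: "strict_mono r2" "convergent ((\<lambda>k. g i (s (r k))) \<circ> r2)"
    using bdd_conv_subseq[of "\<lambda>k. g i (s (r k))" C] bnd by blast
  have "\<forall>j\<in>insert i I. convergent (\<lambda>k. g j (s ((r \<circ> r2) k)))"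
  proof
    fix j assume "j \<in> insert i I"
    then show "convergent (\<lambda>k. g j (s ((r \<circ> r2) k)))"
    proof
      assume "j = i" then show ?thesis using r2(2) by (simp add: o_def)
    next
      assume "j \<in> I"
      then have "convergent ((\<lambda>k. g j (s (r k))) \<circ> r2)" using r(2) r2(1) convergent_subseq_convergent by blast
      then show ?thesis by (simp add: o_def)
    qed
  qed
  moreover have "strict_mono (r \<circ> r2)" using r(1) r2(1) by (rule strict_mono_o)
  ultimately show ?case by blast
qed

lemma diag_pointwise:
  fixes B :: "nat \<Rightarrow> 'v set" and P :: "nat \<Rightarrow> ('v \<Rightarrow> real) \<times> ('v \<Rightarrow> real)"
  assumes fin: "\<And>n. finite (B n)" and cover: "\<And>x. \<exists>n. x \<in> B n"
    and bnd: "\<And>k x. \<bar>fst (P k) x\<bar> \<le> C \<and> \<bar>snd (P k) x\<bar> \<le> C"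
  shows "\<exists>r. strict_mono r \<and> (\<forall>x. convergent (\<lambda>k. fst (P (r k)) x) \<and> convergent (\<lambda>k. snd (P (r k)) x))"
proof -
  define G where "G ib k = (if snd ib then fst (P k) (fst ib) else snd (P k) (fst ib))" for ib :: "'v \<times> bool" and k
  define Q where "Q n s \<longleftrightarrow> (\<forall>ib\<in>B n \<times> UNIV. convergent (\<lambda>k. G ib (s k)))" for n and s :: "nat \<Rightarrow> nat"
  have gb: "\<bar>G ib k\<bar> \<le> C" for ib k using bnd unfolding G_def by auto
  interpret S: subseqs Q
  proof
    fix n and s :: "nat \<Rightarrow> nat" assume s: "strict_mono s"
    have "finite (B n \<times> (UNIV :: bool set))" using fin by simp
    from finite_subseq[where g=G, OF this gb s] obtain r where "strict_mono r" "\<forall>ib\<in>B n \<times> UNIV. convergent (\<lambda>k. G ib (s (r k)))"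
      by blast
    then show "\<exists>r'. strict_mono r' \<and> Q n (s \<circ> r')" unfolding Q_def by (auto simp: o_def)
  qed
  have stable: "Q n (s \<circ> r)" if "strict_mono r" "Q n s" for r s n
  proof -
    have "convergent (\<lambda>k. G ib ((s \<circ> r) k))" if ib: "ib \<in> B n \<times> UNIV" for ib
    proof -
      have "convergent (\<lambda>k. G ib (s k))" using \<open>Q n s\<close> ib unfolding Q_def by blast
      from convergent_subseq_convergent[OF this \<open>strict_mono r\<close>] show ?thesis by (simp add: o_def)
    qed
    then show ?thesis unfolding Q_def by blast
  qed
  have conv: "convergent (\<lambda>k. G ib (S.diagseq k))" for ib
  proof -
    obtain n where n: "fst ib \<in> B n" using cover by blast
    have "Q n (S.diagseq \<circ> (+) (Suc n))" by (rule S.diagseq_holds) (rule stable)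
    then have "convergent (\<lambda>k. G ib (S.diagseq (Suc n + k)))" unfolding Q_def using n
      by (cases ib) (auto simp: o_def)
    then have "convergent (\<lambda>k. G ib (S.diagseq (k + Suc n)))" by (simp add: add.commute)
    then show ?thesis by (rule convergent_ignore_initial_segment[THEN iffD1])
  qed
  show ?thesis
  proof (intro exI[of _ S.diagseq] conjI allI)
    show "strict_mono S.diagseq" by (rule S.subseq_diagseq)
    fix x
    show "convergent (\<lambda>k. fst (P (S.diagseq k)) x)" using conv[of "(x, True)"] unfolding G_def by simp
    show "convergent (\<lambda>k. snd (P (S.diagseq k)) x)" using conv[of "(x, False)"] unfolding G_def by simp
  qed
qed

lemma gdist_walk: assumes "\<forall>x y. \<exists>n f. walk w n f x y" shows "\<exists>f. walk w (gdist w x y) f x y"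
  unfolding gdist_def by (rule LeastI_ex) (use assms in blast)

lemma gdist_le: "walk w m f x y \<Longrightarrow> gdist w x y \<le> m"
  unfolding gdist_def by (auto intro: Least_le)

lemma ball_finite:
  assumes fa: "\<forall>x. finite {y. adj w x y}" and conn: "\<forall>x y. \<exists>n f. walk w n f x y"
  shows "finite {y. gdist w x0 y \<le> n}"
proof (induction n)
  case 0
  have "{y. gdist w x0 y \<le> 0} \<subseteq> {x0}"
  proof
    fix y assume "y \<in> {y. gdist w x0 y \<le> 0}"
    then have g0: "gdist w x0 y = 0" by simp
    obtain f where "walk w (gdist w x0 y) f x0 y" using gdist_walk[OF conn] by blast
    then show "y \<in> {x0}" using g0 unfolding walk_def by auto
  qed
  then show ?case by (rule finite_subset) simp
next
  case (Suc n)
  have "{y. gdist w x0 y \<le> Suc n} \<subseteq> {y. gdist w x0 y \<le> n} \<union> (\<Union>z\<in>{y. gdist w x0 y \<le> n}. {y. adj w z y})"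
  proof
    fix y assume y: "y \<in> {y. gdist w x0 y \<le> Suc n}"
    obtain f where f: "walk w (gdist w x0 y) f x0 y" using gdist_walk[OF conn] by blast
    show "y \<in> {y. gdist w x0 y \<le> n} \<union> (\<Union>z\<in>{y. gdist w x0 y \<le> n}. {y. adj w z y})"
    proof (cases "gdist w x0 y")
      case 0
      then have "y = x0" using f unfolding walk_def by auto
      moreover have "walk w 0 (\<lambda>_. x0) x0 x0" unfolding walk_def by simp
      ultimately show ?thesis using gdist_le[of w 0 "\<lambda>_. x0" x0 x0] by simp
    next
      case (Suc k)
      have wk: "walk w k f x0 (f k)" and ad: "adj w (f k) y" using f Suc unfolding walk_def by auto
      from wk have "gdist w x0 (f k) \<le> k" by (rule gdist_le)
      then have "f k \<in> {y. gdist w x0 y \<le> n}" using y Suc by simp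
      then show ?thesis using ad by blast
    qed
  qed
  moreover have "finite ({y. gdist w x0 y \<le> n} \<union> (\<Union>z\<in>{y. gdist w x0 y \<le> n}. {y. adj w z y}))"
    using Suc.IH fa by auto
  ultimately show ?case by (rule finite_subset)
qed


context ctx begin

lemma e_conv:
  assumes c1: "\<And>x. (\<lambda>k. fst (P k) x) \<longlonglongrightarrow> fst q x" and c2: "\<And>x. (\<lambda>k. snd (P k) x) \<longlonglongrightarrow> snd q x"
  shows "(\<lambda>k. e (P k) x) \<longlonglongrightarrow> e q x"
  unfolding e_def grad2_def Gam_def by (intro tendsto_intros c1 c2)

lemma fatou:
  assumes inP: "\<And>k. inH (P k)" and bP: "\<And>k. nsq (P k) \<le> Mq"
    and c1: "\<And>x. (\<lambda>k. fst (P k) x) \<longlonglongrightarrow> fst q x" and c2: "\<And>x. (\<lambda>k. snd (P k) x) \<longlonglongrightarrow> snd q x"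
  shows "inH q" "nsq q \<le> Mq"
proof -
  have fs: "sum (\<lambda>x. mu x * e q x) F \<le> Mq" if F: "finite F" for F
  proof -
    have lim: "(\<lambda>k. sum (\<lambda>x. mu x * e (P k) x) F) \<longlonglongrightarrow> sum (\<lambda>x. mu x * e q x) F"
      by (intro tendsto_intros e_conv c1 c2)
    have "sum (\<lambda>x. mu x * e (P k) x) F \<le> Mq" for k
    proof -
      have "sum (\<lambda>x. mu x * e (P k) x) F \<le> nsq (P k)"
        unfolding nsq_def using inP[of k] F unfolding inH_def
        by (intro finite_sum_le_infsum) (auto intro: mue_nn)
      then show ?thesis using bP[of k] by simp
    qed
    then show ?thesis by (intro tendsto_upperbound[OF lim]) auto
  qed
  show iq: "inH q" unfolding inH_def
    by (rule nonneg_bdd_above_summable_on) (auto intro: mue_nn fs bdd_aboveI2)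
  show "nsq q \<le> Mq" unfolding nsq_def
    using iq unfolding inH_def by (rule infsum_le_finite_sums) (rule fs)
qed

lemma lsc:
  assumes inP: "\<And>k. inH (P k)" and iq: "inH q"
    and c1: "\<And>x. (\<lambda>k. fst (P k) x) \<longlonglongrightarrow> fst q x" and c2: "\<And>x. (\<lambda>k. snd (P k) x) \<longlonglongrightarrow> snd q x"
    and eps: "\<epsilon> > 0"
  shows "eventually (\<lambda>k. nsq q - \<epsilon> < nsq (P k)) sequentially"
proof -
  obtain F where F: "finite F" "dist (sum (\<lambda>x. mu x * e q x) F) (nsq q) \<le> \<epsilon> / 2"
    using infsum_finite_approximation[of "\<lambda>x. mu x * e q x" UNIV "\<epsilon> / 2"] iq eps
    unfolding inH_def nsq_def by auto
  have lim: "(\<lambda>k. sum (\<lambda>x. mu x * e (P k) x) F) \<longlonglongrightarrow> sum (\<lambda>x. mu x * e q x) F"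
    by (intro tendsto_intros e_conv c1 c2)
  have ev: "eventually (\<lambda>k. sum (\<lambda>x. mu x * e q x) F - \<epsilon> / 2 < sum (\<lambda>x. mu x * e (P k) x) F) sequentially"
    using order_tendstoD(1)[OF lim, of "sum (\<lambda>x. mu x * e q x) F - \<epsilon> / 2"] eps by simp
  show ?thesis
  proof (rule eventually_mono[OF ev])
    fix k assume k: "sum (\<lambda>x. mu x * e q x) F - \<epsilon> / 2 < sum (\<lambda>x. mu x * e (P k) x) F"
    have "sum (\<lambda>x. mu x * e (P k) x) F \<le> nsq (P k)"
      unfolding nsq_def using inP[of k] F unfolding inH_def
      by (intro finite_sum_le_infsum) (auto intro: mue_nn)
    moreover have "nsq q - \<epsilon> / 2 \<le> sum (\<lambda>x. mu x * e q x) F" using F(2) unfolding dist_real_def by arith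
    ultimately show "nsq q - \<epsilon> < nsq (P k)" using k eps by linarith
  qed
qed

lemma sum_finite_conv0:
  assumes fin: "finite F" and c1: "\<And>x. (\<lambda>k. fst (P k) x) \<longlonglongrightarrow> fst q x" and c2: "\<And>x. (\<lambda>k. snd (P k) x) \<longlonglongrightarrow> snd q x"
  shows "(\<lambda>k. sum (\<lambda>x. mu x * ((fst q x - fst (P k) x)\<^sup>2 + (snd q x - snd (P k) x)\<^sup>2)) F) \<longlonglongrightarrow> 0"
proof -
  have "(\<lambda>k. sum (\<lambda>x. mu x * ((fst q x - fst (P k) x)\<^sup>2 + (snd q x - snd (P k) x)\<^sup>2)) F)
      \<longlonglongrightarrow> sum (\<lambda>x. mu x * ((fst q x - fst q x)\<^sup>2 + (snd q x - snd q x)\<^sup>2)) F"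
    by (intro tendsto_intros c1 c2)
  then show ?thesis by simp
qed

lemma tail_pt:
  assumes "Mb > 0" "Mb \<le> a x" "Mb \<le> b x"
  shows "mu x * ((fst q x - fst P x)\<^sup>2 + (snd q x - snd P x)\<^sup>2) \<le> (2 / (lam * Mb)) * (mu x * e q x + mu x * e P x)"
proof -
  have lM: "lam * Mb > 0" using assms lam by simp
  have s1: "(fst q x - fst P x)\<^sup>2 \<le> 2 * (fst q x)\<^sup>2 + 2 * (fst P x)\<^sup>2"
    using zero_le_power2[of "fst q x + fst P x"] unfolding power2_diff power2_sum by linarith
  have s2: "(snd q x - snd P x)\<^sup>2 \<le> 2 * (snd q x)\<^sup>2 + 2 * (snd P x)\<^sup>2"
    using zero_le_power2[of "snd q x + snd P x"] unfolding power2_diff power2_sum by linarith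
  have t: "lam * Mb * ((fst r x)\<^sup>2 + (snd r x)\<^sup>2) \<le> e r x" for r
  proof -
    have "lam * Mb * (fst r x)\<^sup>2 \<le> lam * a x * (fst r x)\<^sup>2" using assms lam by (intro mult_right_mono mult_left_mono) auto
    moreover have "lam * Mb * (snd r x)\<^sup>2 \<le> lam * b x * (snd r x)\<^sup>2" using assms lam by (intro mult_right_mono mult_left_mono) auto
    ultimately show ?thesis using lam_le_e[where p=r and x=x] by (simp add: algebra_simps)
  qed
  have "(fst q x - fst P x)\<^sup>2 + (snd q x - snd P x)\<^sup>2 \<le> 2 * (((fst q x)\<^sup>2 + (snd q x)\<^sup>2) + ((fst P x)\<^sup>2 + (snd P x)\<^sup>2))"
    using s1 s2 by simp
  also have "\<dots> \<le> 2 * (e q x / (lam * Mb) + e P x / (lam * Mb))"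
  proof -
    have t': "(fst r x)\<^sup>2 + (snd r x)\<^sup>2 \<le> e r x / (lam * Mb)" for r
      unfolding pos_le_divide_eq[OF lM] using t[of r] by (simp add: mult.commute)
    show ?thesis using add_mono[OF t'[of q] t'[of P]] by simp
  qed
  finally have "(fst q x - fst P x)\<^sup>2 + (snd q x - snd P x)\<^sup>2 \<le> (2 / (lam * Mb)) * (e q x + e P x)"
    by (simp add: add_divide_distrib)
  then have "mu x * ((fst q x - fst P x)\<^sup>2 + (snd q x - snd P x)\<^sup>2) \<le> mu x * ((2 / (lam * Mb)) * (e q x + e P x))"
    using mu_pos[of x] by (intro mult_left_mono) auto
  then show ?thesis by (simp add: algebra_simps)
qed


lemma L2_conv:
  assumes inP: "\<And>k. inH (P k)" and bP: "\<And>k. nsq (P k) \<le> Mq" and iq: "inH q" and bq: "nsq q \<le> Mq"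
    and c1: "\<And>x. (\<lambda>k. fst (P k) x) \<longlonglongrightarrow> fst q x" and c2: "\<And>x. (\<lambda>k. snd (P k) x) \<longlonglongrightarrow> snd q x"
    and tail: "\<And>Mb. \<exists>F. finite F \<and> (\<forall>x. x \<notin> F \<longrightarrow> Mb \<le> a x \<and> Mb \<le> b x)"
  shows "(\<lambda>k. L2 (psub q (P k))) \<longlonglongrightarrow> 0"
proof (rule LIMSEQ_I)
  fix \<epsilon> :: real assume eps: "\<epsilon> > 0"
  have Mq0: "Mq \<ge> 0" using bq nsq_nn[of q] by simp
  define Mb where "Mb = 8 * (Mq + 1) / (lam * \<epsilon>)"
  have Mb0: "Mb > 0" unfolding Mb_def using Mq0 lam eps by simp
  have lMb: "lam * Mb = 8 * (Mq + 1) / \<epsilon>" unfolding Mb_def using lam eps by simp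
  obtain F where F: "finite F" "\<forall>x. x \<notin> F \<longrightarrow> Mb \<le> a x \<and> Mb \<le> b x" using tail by blast
  define f where "f k x = mu x * ((fst q x - fst (P k) x)\<^sup>2 + (snd q x - snd (P k) x)\<^sup>2)" for k x
  have e2: "\<epsilon> / 2 > 0" using eps by simp
  obtain N where N: "\<forall>k\<ge>N. norm (sum (f k) F - 0) < \<epsilon> / 2"
    using LIMSEQ_D[OF sum_finite_conv0[OF F(1) c1 c2] e2] unfolding f_def by blast
  show "\<exists>no. \<forall>n\<ge>no. norm (L2 (psub q (P n)) - 0) < \<epsilon>"
  proof (intro exI allI impI)
    fix k assume k: "k \<ge> N"
    have L2eq: "L2 (psub q (P k)) = infsum (f k) UNIV" unfolding L2_def f_def by simp
    have sk: "f k summable_on UNIV"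
      using L2_summable[OF inH_psub[OF iq inP[of k]]] unfolding f_def by simp
    have fnn: "f k x \<ge> 0" for x unfolding f_def using mu_pos[of x] by simp
    have "infsum (f k) UNIV = infsum (f k) (F \<union> -F)" by simp
    also have "\<dots> = infsum (f k) F + infsum (f k) (-F)"
      by (rule infsum_Un_disjoint) (auto intro: summable_on_subset[OF sk])
    also have "infsum (f k) F = sum (f k) F" using F(1) by simp
    finally have split: "infsum (f k) UNIV = sum (f k) F + infsum (f k) (-F)" .
    define g where "g x = (2 / (lam * Mb)) * (mu x * e q x + mu x * e (P k) x)" for x
    have gs: "g summable_on UNIV" unfolding g_def
      using iq inP[of k] unfolding inH_def by (intro summable_on_cmult_right summable_on_add)
    have gnn: "g x \<ge> 0" for x unfolding g_def using lam Mb0 mue_nn[of x q] mue_nn[of x "P k"] by simp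
    have fg: "f k x \<le> g x" if "x \<notin> F" for x
      unfolding f_def g_def using tail_pt[where Mb=Mb and x=x and q=q and P="P k"] F(2) that Mb0 by blast
    have "infsum (f k) (-F) \<le> infsum g (-F)"
      by (rule infsum_mono) (auto intro: summable_on_subset[OF sk] summable_on_subset[OF gs] fg)
    also have "\<dots> \<le> infsum g UNIV"
      by (rule infsum_mono_neutral) (auto intro: summable_on_subset[OF gs] gs gnn)
    also have "infsum g UNIV = (2 / (lam * Mb)) * (nsq q + nsq (P k))"
      unfolding g_def nsq_def infsum_cmult_right'
      using iq inP[of k] unfolding inH_def by (simp add: infsum_add)
    also have "\<dots> \<le> (2 / (lam * Mb)) * (2 * Mq)"
      using bq bP[of k] lam Mb0 by (intro mult_left_mono) auto
    also have "\<dots> = \<epsilon> * Mq / (2 * (Mq + 1))" unfolding lMb using Mq0 eps by (simp add: field_simps)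
    also have "\<dots> \<le> \<epsilon> / 2"
    proof -
      have "\<epsilon> * Mq \<le> \<epsilon> * (Mq + 1)" using eps by simp
      then show ?thesis using Mq0 by (simp add: divide_le_eq field_simps)
    qed
    finally have tl: "infsum (f k) (-F) \<le> \<epsilon> / 2" .
    have "\<bar>sum (f k) F\<bar> < \<epsilon> / 2" using N k by simp
    then have "sum (f k) F < \<epsilon> / 2" by simp
    then have "infsum (f k) UNIV < \<epsilon>" using split tl by simp
    moreover have "infsum (f k) UNIV \<ge> 0" using fnn by (intro infsum_nonneg) auto
    ultimately show "norm (L2 (psub q (P k)) - 0) < \<epsilon>" unfolding L2eq by simp
  qed
qed

end


lemma quad_bound:
  fixes c0 A B x :: real
  assumes "c0 > 0" "A \<ge> 0" "B \<ge> 0" "x \<ge> 0" "c0 * x\<^sup>2 \<le> A + B * x"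
  shows "x \<le> max 1 ((A + B) / c0)"
proof (cases "x \<le> 1")
  case True then show ?thesis by simp
next
  case False
  then have x1: "x \<ge> 1" by simp
  have "A \<le> A * x" using assms(2) x1 by (simp add: mult_le_cancel_left1)
  then have "c0 * x * x \<le> (A + B) * x" using assms(5) by (simp add: power2_eq_square algebra_simps)
  then have "c0 * x \<le> A + B" using x1 by (simp add: mult.commute[of _ x] mult.left_commute)
  then have "x \<le> (A + B) / c0" using assms(1) by (simp add: field_simps)
  then show ?thesis by simp
qed

context ctx begin

lemma main:
  fixes p :: "nat \<Rightarrow> 'v pairfun" and D :: "nat \<Rightarrow> 'v pairfun \<Rightarrow> real" and c :: real
    and Bs :: "nat \<Rightarrow> 'v set"
  assumes fin: "\<And>n. finite (Bs n)" and cover: "\<And>x. \<exists>n. x \<in> Bs n"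
    and tailB: "\<And>Mb. \<exists>n. \<forall>x. x \<notin> Bs n \<longrightarrow> Mb \<le> a x \<and> Mb \<le> b x"
    and pH: "\<forall>k. p k \<in> H_lam w mu a b lam"
    and Jc: "(\<lambda>k. J_lam w mu a b lam \<alpha> \<beta> (p k)) \<longlonglongrightarrow> c"
    and fr: "\<forall>k. frechet_deriv_H (H_lam w mu a b lam) (H_norm w mu a b lam) (J_lam w mu a b lam \<alpha> \<beta>) (p k) (D k)"
    and dn: "(\<lambda>k. dual_norm (H_lam w mu a b lam) (H_norm w mu a b lam) (D k)) \<longlonglongrightarrow> 0"
  shows "(\<exists>M. \<forall>k. H_norm w mu a b lam (p k) \<le> M) \<and>
     (\<exists>r q. strict_mono r \<and> q \<in> H_lam w mu a b lam \<and>
        (\<lambda>k. H_norm w mu a b lam (psub (p (r k)) q)) \<longlonglongrightarrow> 0)"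
proof -
  define \<gamma> where "\<gamma> = \<alpha> + \<beta>"
  have g2: "\<gamma> > 2" unfolding \<gamma>_def using alpha beta by simp
  define dd where "dd k = dual_norm (H_lam w mu a b lam) (H_norm w mu a b lam) (D k)" for k
  have inP: "inH (p k)" for k using pH H_iff by blast
  obtain Cj where Cj: "Cj > 0" "\<forall>k. norm (J_lam w mu a b lam \<alpha> \<beta> (p k)) \<le> Cj"
    using BseqE[OF convergent_imp_Bseq[OF convergentI[OF Jc]]] by blast
  obtain Cd where Cd: "Cd > 0" "\<forall>k. norm (dd k) \<le> Cd"
    using BseqE[OF convergent_imp_Bseq[OF convergentI[OF dn]]] unfolding dd_def by blast
  define c0 where "c0 = 1/2 - 1/\<gamma>"
  have c0: "c0 > 0" unfolding c0_def using g2 by (simp add: field_simps)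
  define M0 where "M0 = max 1 ((Cj + Cd / \<gamma>) / c0)"
  have M01: "M0 \<ge> 1" unfolding M0_def by simp
  have bnd: "sqrt (nsq (p k)) \<le> M0" for k
  proof -
    have Dk: "D k (p k) = nsq (p k) - Nl (p k)" using deriv_self fr inP by blast
    have Dkb: "\<bar>D k (p k)\<bar> \<le> dd k * sqrt (nsq (p k))"
      using dual_bound[of "J_lam w mu a b lam \<alpha> \<beta>" "p k" "D k" "p k"] fr inP unfolding dd_def H_norm_eq by blast
    also have "\<dots> \<le> Cd * sqrt (nsq (p k))" using Cd nsq_nn[of "p k"] by (intro mult_right_mono) (auto simp: abs_le_iff)
    finally have Dkb: "\<bar>D k (p k)\<bar> \<le> Cd * sqrt (nsq (p k))" .
    have eq: "J_lam w mu a b lam \<alpha> \<beta> (p k) - D k (p k) / \<gamma> = c0 * nsq (p k)"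
    proof -
      have "\<gamma> \<noteq> 0" using g2 by simp
      then show ?thesis unfolding J_eq Dk c0_def \<gamma>_def[symmetric] by (simp add: field_simps)
    qed
    have "c0 * nsq (p k) \<le> \<bar>J_lam w mu a b lam \<alpha> \<beta> (p k)\<bar> + \<bar>D k (p k)\<bar> / \<gamma>"
    proof -
      have "(- D k (p k)) / \<gamma> \<le> \<bar>D k (p k)\<bar> / \<gamma>" using g2 by (intro divide_right_mono) auto
      moreover have "J_lam w mu a b lam \<alpha> \<beta> (p k) \<le> \<bar>J_lam w mu a b lam \<alpha> \<beta> (p k)\<bar>" by simp
      ultimately show ?thesis unfolding eq[symmetric] by simp
    qed
    also have "\<dots> \<le> Cj + (Cd / \<gamma>) * sqrt (nsq (p k))"
      using Cj Dkb g2 by (intro add_mono) (auto simp: divide_le_eq field_simps)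
    finally have "c0 * (sqrt (nsq (p k)))\<^sup>2 \<le> Cj + (Cd / \<gamma>) * sqrt (nsq (p k))"
      using nsq_nn[of "p k"] by simp
    moreover have "Cd / \<gamma> \<ge> 0" using Cd g2 by simp
    ultimately show ?thesis unfolding M0_def
      using quad_bound[OF c0 less_imp_le[OF Cj(1)] _ real_sqrt_ge_zero[OF nsq_nn]] by blast
  qed
  define Mq where "Mq = M0\<^sup>2"
  have Mq0: "Mq \<ge> 0" unfolding Mq_def by simp
  have bP: "nsq (p k) \<le> Mq" for k
  proof -
    have "(sqrt (nsq (p k)))\<^sup>2 \<le> M0\<^sup>2" using bnd[of k] nsq_nn[of "p k"] by (intro power_mono) auto
    then show ?thesis unfolding Mq_def using nsq_nn[of "p k"] by simp
  qed
  have part1: "\<exists>M. \<forall>k. H_norm w mu a b lam (p k) \<le> M"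
    using bnd unfolding H_norm_eq by blast
  define C where "C = sqrt (Mq / m0)"
  have pb: "\<bar>fst (p k) x\<bar> \<le> C \<and> \<bar>snd (p k) x\<bar> \<le> C" for k x
  proof -
    have "sqrt (nsq (p k) / m0) \<le> C" unfolding C_def using bP[of k] m0
      by (intro real_sqrt_le_mono divide_right_mono) auto
    then show ?thesis using sup_bound1[OF inP[of k], of x] by auto
  qed
  obtain r where r: "strict_mono r" "\<forall>x. convergent (\<lambda>k. fst (p (r k)) x) \<and> convergent (\<lambda>k. snd (p (r k)) x)"
    using diag_pointwise[where P=p, OF fin cover pb] by blast
  define q where "q = ((\<lambda>x. lim (\<lambda>k. fst (p (r k)) x)), (\<lambda>x. lim (\<lambda>k. snd (p (r k)) x)))"
  define P where "P k = p (r k)" for k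
  have c1: "(\<lambda>k. fst (P k) x) \<longlonglongrightarrow> fst q x" for x
    using r(2) unfolding q_def P_def by (simp add: convergent_LIMSEQ_iff)
  have c2: "(\<lambda>k. snd (P k) x) \<longlonglongrightarrow> snd q x" for x
    using r(2) unfolding q_def P_def by (simp add: convergent_LIMSEQ_iff)
  have inPP: "inH (P k)" for k unfolding P_def by (rule inP)
  have bPP: "nsq (P k) \<le> Mq" for k unfolding P_def by (rule bP)
  have iq: "inH q" and bq: "nsq q \<le> Mq" using fatou[OF inPP bPP c1 c2] by auto
  have tailF: "\<exists>F. finite F \<and> (\<forall>x. x \<notin> F \<longrightarrow> Mb \<le> a x \<and> Mb \<le> b x)" for Mb
    using tailB[of Mb] fin by blast
  have L2c: "(\<lambda>k. L2 (psub q (P k))) \<longlonglongrightarrow> 0"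
    by (rule L2_conv[OF inPP bPP iq bq c1 c2 tailF])
  define h where "h k = psub q (P k)" for k
  have inh: "inH (h k)" for k unfolding h_def by (intro inH_psub iq inPP)
  have bh: "nsq (h k) \<le> 4 * Mq" for k
  proof -
    have "nsq (h k) \<le> infsum (\<lambda>x. 2 * (mu x * e q x) + 2 * (mu x * e (P k) x)) UNIV"
      unfolding nsq_def
    proof (rule infsum_mono)
      show "(\<lambda>x. mu x * e (h k) x) summable_on UNIV" using inh[of k] unfolding inH_def .
      show "(\<lambda>x. 2 * (mu x * e q x) + 2 * (mu x * e (P k) x)) summable_on UNIV"
        using iq inPP[of k] unfolding inH_def by (intro summable_on_add summable_on_cmult_right)
      fix x
      have "e (h k) x \<le> 2 * e q x + 2 * (-1)\<^sup>2 * e (P k) x"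
        unfolding h_def psub_eq by (rule e_comb_le)
      then have "mu x * e (h k) x \<le> mu x * (2 * e q x + 2 * e (P k) x)"
        using mu_pos[of x] by (intro mult_left_mono) auto
      then show "mu x * e (h k) x \<le> 2 * (mu x * e q x) + 2 * (mu x * e (P k) x)" by (simp add: algebra_simps)
    qed
    also have "\<dots> = 2 * nsq q + 2 * nsq (P k)"
      unfolding nsq_def using iq inPP[of k] unfolding inH_def
      by (simp add: infsum_add summable_on_cmult_right infsum_cmult_right')
    finally show ?thesis using bq bPP[of k] by simp
  qed
  have nh: "H_norm w mu a b lam (h k) \<le> 2 * M0" for k
  proof -
    have "sqrt (nsq (h k)) \<le> sqrt (4 * Mq)" using bh[of k] by (rule real_sqrt_le_mono)
    also have "sqrt (4 * Mq) = 2 * M0" unfolding Mq_def using M01 by (simp add: real_sqrt_mult)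
    finally show ?thesis unfolding H_norm_eq .
  qed
  have Dconv: "(\<lambda>k. D (r k) (h k)) \<longlonglongrightarrow> 0"
  proof (rule Lim_null_comparison)
    show "\<forall>\<^sub>F k in sequentially. norm (D (r k) (h k)) \<le> \<bar>dd (r k)\<bar> * (2 * M0)"
    proof (rule always_eventually, rule allI)
      fix k
      have "\<bar>D (r k) (h k)\<bar> \<le> dd (r k) * H_norm w mu a b lam (h k)"
        using dual_bound[of "J_lam w mu a b lam \<alpha> \<beta>" "p (r k)" "D (r k)" "h k"] fr inh unfolding dd_def by blast
      also have "\<dots> \<le> \<bar>dd (r k)\<bar> * (2 * M0)" using nh[of k] nrm_nn[of "h k"]
        by (intro mult_mono) auto
      finally show "norm (D (r k) (h k)) \<le> \<bar>dd (r k)\<bar> * (2 * M0)" by simp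
    qed
    have "(dd \<circ> r) \<longlonglongrightarrow> 0" using LIMSEQ_subseq_LIMSEQ[OF dn r(1)] unfolding dd_def by (simp add: o_def)
    then have "(\<lambda>k. \<bar>dd (r k)\<bar>) \<longlonglongrightarrow> 0" using tendsto_rabs_zero by (simp add: o_def)
    then show "(\<lambda>k. \<bar>dd (r k)\<bar> * (2 * M0)) \<longlonglongrightarrow> 0" using tendsto_mult_left_zero by blast
  qed
  define R0 where "R0 = sqrt (Mq / m0) + sqrt (4 * Mq / m0)"
  define A0 where "A0 = \<gamma> * (R0 powr (\<alpha> - 1) * R0 powr (\<beta> - 1))"
  define K0 where "K0 = A0 * (sqrt 2 * sqrt (15 * Mq))"
  have Kb: "Kc (P k) (h k) \<le> K0 * sqrt (L2 (h k))" for k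
  proof -
    define R where "R = sqrt (nsq (P k) / m0) + sqrt (nsq (h k) / m0)"
    have R0R: "R \<le> R0" unfolding R_def R0_def using bPP[of k] bh[of k] m0
      by (intro add_mono real_sqrt_le_mono divide_right_mono) auto
    have R0: "R \<ge> 0" unfolding R_def using nsq_nn[of "P k"] nsq_nn[of "h k"] m0 by simp
    have pa: "R powr (\<alpha> - 1) \<le> R0 powr (\<alpha> - 1)" using R0R R0 alpha by (intro powr_mono2) auto
    have pb: "R powr (\<beta> - 1) \<le> R0 powr (\<beta> - 1)" using R0R R0 beta by (intro powr_mono2) auto
    have A: "\<gamma> * (R powr (\<alpha> - 1) * R powr (\<beta> - 1)) \<le> A0" unfolding A0_def
      using pa pb g2 by (intro mult_left_mono mult_mono) auto
    define S where "S = infsum (\<lambda>x. mu x * Sf (P k) (h k) x) UNIV"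
    have S0: "S \<ge> 0" unfolding S_def using mu_pos
      by (intro infsum_nonneg mult_nonneg_nonneg) (auto simp: Sf_def less_imp_le)
    have "S \<le> sqrt (2 * L2 (h k)) * sqrt (3 * (L2 (P k) + L2 (h k)))"
      unfolding S_def by (rule Sf_cs(2)[OF inPP inh])
    also have "\<dots> \<le> sqrt (2 * L2 (h k)) * sqrt (15 * Mq)"
    proof (intro mult_left_mono real_sqrt_le_mono)
      show "3 * (L2 (P k) + L2 (h k)) \<le> 15 * Mq"
        using L2_le[OF inPP[of k]] L2_le[OF inh[of k]] bPP[of k] bh[of k] by simp
    qed (simp add: L2_nn)
    also have "\<dots> = (sqrt 2 * sqrt (15 * Mq)) * sqrt (L2 (h k))" by (simp add: real_sqrt_mult)
    finally have Sb: "S \<le> (sqrt 2 * sqrt (15 * Mq)) * sqrt (L2 (h k))" .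
    have "Kc (P k) (h k) = (\<gamma> * (R powr (\<alpha> - 1) * R powr (\<beta> - 1))) * S"
      unfolding Kc_def R_def S_def \<gamma>_def ..
    also have "\<dots> \<le> A0 * ((sqrt 2 * sqrt (15 * Mq)) * sqrt (L2 (h k)))"
      using A Sb S0 g2 by (intro mult_mono) (auto simp: A0_def R0_def)
    finally show ?thesis unfolding K0_def by (simp add: mult.assoc)
  qed
  have Bconv: "(\<lambda>k. Bf (P k) (h k)) \<longlonglongrightarrow> 0"
  proof (rule Lim_null_comparison)
    show "\<forall>\<^sub>F k in sequentially. norm (Bf (P k) (h k)) \<le> \<bar>D (r k) (h k)\<bar> + K0 * sqrt (L2 (h k)) / \<gamma>"
    proof (rule always_eventually, rule allI)
      fix k
      have "\<bar>D (r k) (h k) - Bf (P k) (h k)\<bar> \<le> Kc (P k) (h k) / (\<alpha> + \<beta>)"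
        using deriv_bound[of "P k" "D (r k)" "h k"] fr inPP inh unfolding P_def by blast
      also have "\<dots> \<le> K0 * sqrt (L2 (h k)) / \<gamma>" unfolding \<gamma>_def[symmetric]
        using Kb[of k] g2 by (intro divide_right_mono) auto
      finally show "norm (Bf (P k) (h k)) \<le> \<bar>D (r k) (h k)\<bar> + K0 * sqrt (L2 (h k)) / \<gamma>" by simp
    qed
    have "(\<lambda>k. sqrt (L2 (h k))) \<longlonglongrightarrow> sqrt 0" unfolding h_def by (intro tendsto_intros L2c)
    then have "(\<lambda>k. K0 * sqrt (L2 (h k)) / \<gamma>) \<longlonglongrightarrow> K0 * 0 / \<gamma>" using g2 by (intro tendsto_intros) auto
    moreover have "(\<lambda>k. \<bar>D (r k) (h k)\<bar>) \<longlonglongrightarrow> 0" using tendsto_rabs_zero[OF Dconv] .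
    ultimately show "(\<lambda>k. \<bar>D (r k) (h k)\<bar> + K0 * sqrt (L2 (h k)) / \<gamma>) \<longlonglongrightarrow> 0"
      using tendsto_add[of "\<lambda>k. \<bar>D (r k) (h k)\<bar>" 0 sequentially "\<lambda>k. K0 * sqrt (L2 (h k)) / \<gamma>" 0] by simp
  qed
  have eqn: "nsq (psub (P k) q) = nsq q - nsq (P k) - 2 * Bf (P k) (h k)" for k
  proof -
    have "nsq (psub (P k) q) = nsq (P k) + 2 * (-1) * Bf (P k) q + (-1)\<^sup>2 * nsq q"
      unfolding psub_eq by (rule nsq_expand[OF inPP iq])
    moreover have "Bf (P k) (h k) = Bf (P k) q - nsq (P k)" unfolding h_def by (rule Bf_psub[OF inPP iq])
    ultimately show ?thesis by simp
  qed
  have nconv: "(\<lambda>k. nsq (psub (P k) q)) \<longlonglongrightarrow> 0"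
  proof (rule tendstoI)
    fix \<epsilon> :: real assume eps: "\<epsilon> > 0"
    have e1: "eventually (\<lambda>k. nsq q - \<epsilon> / 2 < nsq (P k)) sequentially"
      by (rule lsc[OF inPP iq c1 c2]) (use eps in simp)
    have e2: "eventually (\<lambda>k. dist (Bf (P k) (h k)) 0 < \<epsilon> / 4) sequentially"
      by (rule tendstoD[OF Bconv]) (use eps in simp)
    show "eventually (\<lambda>k. dist (nsq (psub (P k) q)) 0 < \<epsilon>) sequentially"
    proof (rule eventually_mono[OF eventually_conj[OF e1 e2]])
      fix k assume k: "nsq q - \<epsilon> / 2 < nsq (P k) \<and> dist (Bf (P k) (h k)) 0 < \<epsilon> / 4"
      have "nsq (psub (P k) q) \<ge> 0" by (rule nsq_nn)
      moreover have "nsq (psub (P k) q) < \<epsilon>" unfolding eqn using k by (auto simp: dist_real_def)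
      ultimately show "dist (nsq (psub (P k) q)) 0 < \<epsilon>" by (simp add: dist_real_def)
    qed
  qed
  have "(\<lambda>k. sqrt (nsq (psub (P k) q))) \<longlonglongrightarrow> sqrt 0" by (intro tendsto_intros nconv)
  then have fin2: "(\<lambda>k. H_norm w mu a b lam (psub (p (r k)) q)) \<longlonglongrightarrow> 0"
    unfolding H_norm_eq P_def by simp
  have "q \<in> H_lam w mu a b lam" using iq H_iff by blast
  then show ?thesis using part1 r(1) fin2 by blast
qed

end


theorem lemma3p1:
  fixes w :: "'v \<Rightarrow> 'v \<Rightarrow> real" and mu a b :: "'v \<Rightarrow> real"
    and lam \<alpha> \<beta> :: real
  assumes G: "weighted_graph w mu"
    and alpha: "\<alpha> > 1" and beta: "\<beta> > 1" and lam: "lam > 0"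
    and a_nn: "\<forall>x. a x \<ge> 0" and b_nn: "\<forall>x. b x \<ge> 0"
    and A1a: "bounded_domain w {x. a x = 0}"
    and A1b: "bounded_domain w {x. b x = 0}"
    and A1ab: "bounded_domain w {x. a x = 0 \<and> b x = 0}"
    and A2: "\<exists>x0. \<forall>M. \<exists>R. \<forall>x. gdist w x0 x > R \<longrightarrow> a x \<ge> M \<and> b x \<ge> M"
  shows "\<forall>(c::real) (p :: nat \<Rightarrow> 'v pairfun) (D :: nat \<Rightarrow> 'v pairfun \<Rightarrow> real).
     (\<forall>k. p k \<in> H_lam w mu a b lam) \<and>
     (\<lambda>k. J_lam w mu a b lam \<alpha> \<beta> (p k)) \<longlonglongrightarrow> c \<and>
     (\<forall>k. frechet_deriv_H (H_lam w mu a b lam) (H_norm w mu a b lam)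
            (J_lam w mu a b lam \<alpha> \<beta>) (p k) (D k)) \<and>
     (\<lambda>k. dual_norm (H_lam w mu a b lam) (H_norm w mu a b lam) (D k)) \<longlonglongrightarrow> 0
     \<longrightarrow>
     (\<exists>M. \<forall>k. H_norm w mu a b lam (p k) \<le> M) \<and>
     (\<exists>r q. strict_mono r \<and> q \<in> H_lam w mu a b lam \<and>
        (\<lambda>k. H_norm w mu a b lam (psub (p (r k)) q)) \<longlonglongrightarrow> 0)"
  proof (intro allI impI)
  fix c :: real and p :: "nat \<Rightarrow> 'v pairfun" and D :: "nat \<Rightarrow> 'v pairfun \<Rightarrow> real"
  assume hyp: "(\<forall>k. p k \<in> H_lam w mu a b lam) \<and>
     (\<lambda>k. J_lam w mu a b lam \<alpha> \<beta> (p k)) \<longlonglongrightarrow> c \<and>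
     (\<forall>k. frechet_deriv_H (H_lam w mu a b lam) (H_norm w mu a b lam)
            (J_lam w mu a b lam \<alpha> \<beta>) (p k) (D k)) \<and>
     (\<lambda>k. dual_norm (H_lam w mu a b lam) (H_norm w mu a b lam) (D k)) \<longlonglongrightarrow> 0"
  have wsym: "\<forall>x y. w x y \<ge> 0" and fa: "\<forall>x. finite {y. adj w x y}"
    and conn: "\<forall>x y. \<exists>n f. walk w n f x y" and mm: "\<exists>mu_min>0. \<forall>x. mu x \<ge> mu_min"
    using G unfolding weighted_graph_def by auto
  obtain m0 where m0: "m0 > 0" "\<forall>x. mu x \<ge> m0" using mm by blast
  interpret ctx w mu a b lam \<alpha> \<beta> m0
    using wsym fa m0 alpha beta lam a_nn b_nn by unfold_locales auto
  obtain x0 where x0: "\<forall>M. \<exists>R. \<forall>x. gdist w x0 x > R \<longrightarrow> a x \<ge> M \<and> b x \<ge> M" using A2 by blast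
  define Bs where "Bs n = {y. gdist w x0 y \<le> n}" for n
  have fin: "finite (Bs n)" for n unfolding Bs_def by (rule ball_finite[OF fa conn])
  have cover: "\<exists>n. x \<in> Bs n" for x unfolding Bs_def by blast
  have tailB: "\<exists>n. \<forall>x. x \<notin> Bs n \<longrightarrow> Mb \<le> a x \<and> Mb \<le> b x" for Mb
  proof -
    obtain R where R: "\<forall>x. gdist w x0 x > R \<longrightarrow> a x \<ge> Mb \<and> b x \<ge> Mb" using x0 by blast
    show ?thesis
    proof (intro exI allI impI)
      fix x assume "x \<notin> Bs R"
      then have "gdist w x0 x > R" unfolding Bs_def by simp
      then show "Mb \<le> a x \<and> Mb \<le> b x" using R by blast
    qed
  qed
  show "(\<exists>M. \<forall>k. H_norm w mu a b lam (p k) \<le> M) \<and>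
     (\<exists>r q. strict_mono r \<and> q \<in> H_lam w mu a b lam \<and>
        (\<lambda>k. H_norm w mu a b lam (psub (p (r k)) q)) \<longlonglongrightarrow> 0)"
    using main[OF fin cover tailB] hyp by blast
qed

end
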